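(* For every rewb $\alpha\in\mathrm{REWB}$ over a finite alphabet $\Sigma$, there exists a one-way nondeterministic nested stack automaton $A_\alpha$ with $L(A_\alpha)=L(\alpha)$.
   Context: Fix a finite alphabet $\Sigma$. For $k\ge1$, $[k]=\{1,\dots,k\}$, $B_k=\{[_i,\,]_i:i\in[k]\}$ fresh brackets. $g$ is the homomorphism fixing letters of $\Sigma$ and erasing brackets. Rewbs: $\mathrm{REWB}_k$ and $\mathrm{var}(\alpha)$ defined inductively: $a\in\Sigma\cup\{\varepsilon\}$ ($\mathrm{var}=\emptyset$); $\backslash i$, $i\in[k]$ ($\mathrm{var}=\{i\}$); $\alpha_0\alpha_1$, $\alpha_0+\alpha_1$ (union of vars); $\alpha_0^\ast$; $(_j\alpha_0)_j$ for $j\in[k]\setminus\mathrm{var}(\alpha_0)$ (var gains $j$). Labels may be repeated on different captures. $\mathrm{REWB}_0$ is the set of ordinary regular expressions and $\mathrm{REWB}=\bigcup_{k\ge0}\mathrm{REWB}_k$. $\mathcal{R}_k(\alpha)$ is the regular language over $\Sigma\uplus B_k\uplus[k]$ obtained reading $\alpha$ as a regular expression with $\backslash i$ as the letter $i$ and $(_i\alpha_0)_i$ as $[_i\,\mathcal{R}_k(\alpha_0)\,]_i$. Dereferencing $\mathcal{D}_k$: repeatedly take the leftmost number $i\in[k]$ in the current string; if no $[_i$ lies to its left, delete this $i$; otherwise take the nearest $[_i$ to its left; if no $]_i$ lies between them the result is undefined; otherwise replace this $i$ by $g(u)$, $u$ the string strictly between that $[_i$ and the first $]_i$ after it; when no numbers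 remain, delete all brackets. $L(\alpha)=\{\mathcal{D}_k(v):v\in\mathcal{R}_k(\alpha)\}$ (for $k=0$, the usual regular language). Automata: a one-way nondeterministic stack automaton (SA) has finite states, a start state, final states, a one-way read-only input (each move reads the current input symbol and either leaves the cursor or advances it), and a stack over a finite alphabet $\Gamma$ with initial symbol $Z_0$, delimited by a bottom marker $\#$ and top marker $\$$. A stack pointer may move left/right within the stack and the machine reads the symbol under it (and can detect bottom/top); only when the pointer is on the top symbol $Z$ may it replace $Z$ by any $w\in\Gamma^\ast$ (pointer then at the new top). It accepts an input if some run consumes all of it and ends in a final state. A nested stack automaton (NSA, Aho 1969) additionally may, at any scanned stack position, create a new substack $¢\,w\,\$$ ($w\in\Gamma^\ast$) inserted just below the scanned symbol, with the pointer moved to the top of the new substack; thereafter the pointer may only move within the part of the stack from $\#$ up to the top of the innermost substack, pushing/popping is allowed only at that top, and an empty innermost substack $¢\$$ may be destroyed, after which the pointer is on the symbol just above where it was. *)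

theory Defs
  imports Main
begin

datatype 'a rewb =
    RSym 'a
  | REps
  | RRef nat
  | RCat "'a rewb" "'a rewb"
  | RAlt "'a rewb" "'a rewb"
  | RStar "'a rewb"
  | RCap nat "'a rewb"

fun rvars :: "'a rewb \<Rightarrow> nat set" where
  "rvars (RSym a) = {}"
| "rvars REps = {}"
| "rvars (RRef i) = {i}"
| "rvars (RCat a b) = rvars a \<union> rvars b"
| "rvars (RAlt a b) = rvars a \<union> rvars b"
| "rvars (RStar a) = rvars a"
| "rvars (RCap j a) = insert j (rvars a)"

fun rewb_k :: "nat \<Rightarrow> 'a rewb \<Rightarrow> bool" where
  "rewb_k k (RSym a) = True"
| "rewb_k k REps = True"
| "rewb_k k (RRef i) = (1 \<le> i \<and> i \<le> k)"
| "rewb_k k (RCat a b) = (rewb_k k a \<and> rewb_k k b)"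
| "rewb_k k (RAlt a b) = (rewb_k k a \<and> rewb_k k b)"
| "rewb_k k (RStar a) = rewb_k k a"
| "rewb_k k (RCap j a) = (1 \<le> j \<and> j \<le> k \<and> j \<notin> rvars a \<and> rewb_k k a)"

text \<open>Symbols of Sigma + B_k + [k]: letters, brackets [_i, ]_i, numbers i.\<close>
datatype 'a sym = Ch 'a | Opn nat | Cls nat | Num nat

inductive_set kstar :: "'b list set \<Rightarrow> 'b list set" for A where
  kstar_nil: "[] \<in> kstar A"
| kstar_app: "u \<in> A \<Longrightarrow> v \<in> kstar A \<Longrightarrow> u @ v \<in> kstar A"

text \<open>The regular language R_k(alpha) (it does not depend on k).\<close>
fun rlang :: "'a rewb \<Rightarrow> 'a sym list set" where
  "rlang (RSym a) = {[Ch a]}"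
| "rlang REps = {[]}"
| "rlang (RRef i) = {[Num i]}"
| "rlang (RCat a b) = {u @ v |u v. u \<in> rlang a \<and> v \<in> rlang b}"
| "rlang (RAlt a b) = rlang a \<union> rlang b"
| "rlang (RStar a) = kstar (rlang a)"
| "rlang (RCap j a) = {[Opn j] @ u @ [Cls j] |u. u \<in> rlang a}"

definition gh :: "'a sym list \<Rightarrow> 'a list" where
  "gh xs = concat (map (\<lambda>x. case x of Ch a \<Rightarrow> [a] | _ \<Rightarrow> []) xs)"

text \<open>Dereferencing, processing the leftmost number each time. The first argument
  is the already processed prefix (which contains no numbers), the second the rest.\<close>
fun deref_aux :: "'a sym list \<Rightarrow> 'a sym list \<Rightarrow> 'a list option" where
  "deref_aux p [] = Some (gh p)"
| "deref_aux p (Num i # r) =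
     (if Opn i \<notin> set p then deref_aux p r
      else (let p2 = rev (takeWhile (\<lambda>x. x \<noteq> Opn i) (rev p)) in
            if Cls i \<notin> set p2 then None
            else deref_aux (p @ map Ch (gh (takeWhile (\<lambda>x. x \<noteq> Cls i) p2))) r))"
| "deref_aux p (x # r) = deref_aux (p @ [x]) r"

definition deref :: "'a sym list \<Rightarrow> 'a list option" where
  "deref v = deref_aux [] v"

definition rewb_lang :: "'a rewb \<Rightarrow> 'a list set" where
  "rewb_lang \<alpha> = {w. \<exists>v \<in> rlang \<alpha>. deref v = Some w}"

text \<open>Stack cells: bottom marker #, stack symbol, substack start marker cent, top marker $.\<close>
datatype 'g cell = SBot | SCell 'g | SCent | STop

datatype 'g sact =
    AStay | ALeft | ARight
  | AReplace "'g list"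
  | ACreate "'g list"
  | ADestroy

fun sact_syms :: "'g sact \<Rightarrow> 'g set" where
  "sact_syms (AReplace w) = set w"
| "sact_syms (ACreate w) = set w"
| "sact_syms _ = {}"

fun cell_syms :: "'g cell \<Rightarrow> 'g set" where
  "cell_syms (SCell g) = {g}"
| "cell_syms _ = {}"

text \<open>A transition (q, x, c, q', adv, act): in state q, with current input symbol x
  (None = end of input) and scanned stack cell c, go to q', advance the input cursor
  iff adv, and perform stack action act.\<close>
record 'a nsa =
  nsa_states :: "nat set"
  nsa_gamma  :: "nat set"
  nsa_delta  :: "(nat \<times> 'a option \<times> nat cell \<times> nat \<times> bool \<times> nat sact) set"
  nsa_init   :: nat
  nsa_Z0     :: nat
  nsa_final  :: "nat set"

definition is_nsa :: "'a nsa \<Rightarrow> bool" where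
  "is_nsa A \<longleftrightarrow> finite (nsa_states A) \<and> finite (nsa_gamma A) \<and> finite (nsa_delta A)
     \<and> nsa_init A \<in> nsa_states A \<and> nsa_Z0 A \<in> nsa_gamma A \<and> nsa_final A \<subseteq> nsa_states A
     \<and> (\<forall>(q, x, c, q', adv, act) \<in> nsa_delta A.
          q \<in> nsa_states A \<and> q' \<in> nsa_states A \<and> cell_syms c \<subseteq> nsa_gamma A
          \<and> sact_syms act \<subseteq> nsa_gamma A)"

text \<open>Index of the top marker of the innermost substack (= first top marker).\<close>
definition top_idx :: "'g cell list \<Rightarrow> nat" where
  "top_idx s = length (takeWhile (\<lambda>c. c \<noteq> STop) s)"

fun stack_move :: "'g cell list \<times> nat \<Rightarrow> 'g sact \<Rightarrow> 'g cell list \<times> nat \<Rightarrow> bool" where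
  "stack_move (s, n) AStay (s', n') \<longleftrightarrow> n \<le> top_idx s \<and> s' = s \<and> n' = n"
| "stack_move (s, n) ALeft (s', n') \<longleftrightarrow> 0 < n \<and> n \<le> top_idx s \<and> s' = s \<and> n' = n - 1"
| "stack_move (s, n) ARight (s', n') \<longleftrightarrow> n < top_idx s \<and> s' = s \<and> n' = n + 1"
| "stack_move (s, n) (AReplace w) (s', n') \<longleftrightarrow>
     0 < n \<and> n + 1 = top_idx s \<and> (\<exists>Z. s ! n = SCell Z)
     \<and> s' = take n s @ map SCell w @ drop (top_idx s) s \<and> n' = n + length w - 1"
| "stack_move (s, n) (ACreate w) (s', n') \<longleftrightarrow>
     0 < n \<and> n < top_idx s
     \<and> s' = take n s @ [SCent] @ map SCell w @ [STop] @ drop n s \<and> n' = n + length w"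
| "stack_move (s, n) ADestroy (s', n') \<longleftrightarrow>
     0 < n \<and> n + 1 = top_idx s \<and> top_idx s < length s \<and> s ! n = SCent
     \<and> s' = take n s @ drop (top_idx s + 1) s \<and> n' = n"

type_synonym ('a, 'g) nconf = "nat \<times> 'a list \<times> 'g cell list \<times> nat"

definition nsa_step :: "'a nsa \<Rightarrow> ('a, nat) nconf \<Rightarrow> ('a, nat) nconf \<Rightarrow> bool" where
  "nsa_step A C C' \<longleftrightarrow>
     (case (C, C') of ((q, w, s, n), (q', w', s', n')) \<Rightarrow>
       n < length s \<and>
       (\<exists>x adv act. (q, x, s ! n, q', adv, act) \<in> nsa_delta A
          \<and> x = (case w of [] \<Rightarrow> None | a # _ \<Rightarrow> Some a)
          \<and> (adv \<longrightarrow> w \<noteq> []) \<and> w' = (if adv then tl w else w)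
          \<and> stack_move (s, n) act (s', n')))"

definition nsa_lang :: "'a nsa \<Rightarrow> 'a list set" where
  "nsa_lang A = {w. \<exists>q s n. (nsa_step A)\<^sup>*\<^sup>* (nsa_init A, w, [SBot, SCell (nsa_Z0 A), STop], 1)
                                              (q, [], s, n) \<and> q \<in> nsa_final A}"

end

theory Submission
  imports Defs "HOL-Library.Countable"
begin


fun map_cell :: "('g \<Rightarrow> 'h) \<Rightarrow> 'g cell \<Rightarrow> 'h cell" where
  "map_cell f (SCell g) = SCell (f g)" | "map_cell f SBot = SBot"
| "map_cell f SCent = SCent" | "map_cell f STop = STop"

fun map_act :: "('g \<Rightarrow> 'h) \<Rightarrow> 'g sact \<Rightarrow> 'h sact" where
  "map_act f (AReplace w) = AReplace (map f w)"
| "map_act f (ACreate w) = ACreate (map f w)"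
| "map_act f AStay = AStay" | "map_act f ALeft = ALeft" | "map_act f ARight = ARight"
| "map_act f ADestroy = ADestroy"

lemma map_cell_inj: "inj f \<Longrightarrow> map_cell f c = map_cell f d \<longleftrightarrow> c = d"
  by (cases c; cases d) (auto dest: injD)

lemma map_cell_eq_simps[simp]:
  "map_cell f c = STop \<longleftrightarrow> c = STop" "map_cell f c = SBot \<longleftrightarrow> c = SBot"
  "map_cell f c = SCent \<longleftrightarrow> c = SCent"
  "map_cell f c = SCell z \<longleftrightarrow> (\<exists>g. c = SCell g \<and> z = f g)"
  by (cases c; auto)+

lemma top_idx_map[simp]: "top_idx (map (map_cell f) s) = top_idx s"
  unfolding top_idx_def by (induct s) auto

lemma inj_map_cell_list: "inj f \<Longrightarrow> map (map_cell f) s = map (map_cell f) t \<longleftrightarrow> s = t"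
proof -
  assume "inj f" then have "inj (map_cell f)" by (simp add: inj_def map_cell_inj)
  then show ?thesis by (simp add: inj_map_eq_map)
qed

lemma top_idx_le: "top_idx s \<le> length s"
  unfolding top_idx_def by (rule length_takeWhile_le)

lemma top_idx_less: "top_idx s < length s \<longleftrightarrow> STop \<in> set s"
  unfolding top_idx_def by (induct s) auto

lemma stack_move_map:
  assumes f: "inj f"
  shows "stack_move (map (map_cell f) s, n) (map_act f a) (t, n') \<longleftrightarrow>
         (\<exists>s'. t = map (map_cell f) s' \<and> stack_move (s, n) a (s', n'))"
proof (cases a)
  case (AReplace w)
  show ?thesis
  proof
    assume h: "stack_move (map (map_cell f) s, n) (map_act f a) (t, n')"
    then have "0 < n" "n + 1 = top_idx s" by (auto simp: AReplace)
    then have "n < length s" using top_idx_le[of s] by linarith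
    with h show "\<exists>s'. t = map (map_cell f) s' \<and> stack_move (s, n) a (s', n')"
      by (auto simp: AReplace take_map drop_map intro!: exI[of _ "take n s @ map SCell w @ drop (top_idx s) s"])
  next
    assume "\<exists>s'. t = map (map_cell f) s' \<and> stack_move (s, n) a (s', n')"
    then obtain s' where "t = map (map_cell f) s'" "stack_move (s, n) a (s', n')" by blast
    moreover from this have "n < length s" using top_idx_le[of s]
      by (auto simp: AReplace)
    ultimately show "stack_move (map (map_cell f) s, n) (map_act f a) (t, n')"
      by (auto simp: AReplace take_map drop_map)
  qed
next
  case (ACreate w)
  then show ?thesis
    by (auto simp: take_map drop_map)
next
  case ADestroy
  show ?thesis
  proof
    assume h: "stack_move (map (map_cell f) s, n) (map_act f a) (t, n')"
    then have "n < length s" by (auto simp: ADestroy)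
    with h show "\<exists>s'. t = map (map_cell f) s' \<and> stack_move (s, n) a (s', n')"
      by (auto simp: ADestroy take_map drop_map intro!: exI[of _ "take n s @ drop (top_idx s + 1) s"])
  next
    assume "\<exists>s'. t = map (map_cell f) s' \<and> stack_move (s, n) a (s', n')"
    then show "stack_move (map (map_cell f) s, n) (map_act f a) (t, n')"
      by (auto simp: ADestroy take_map drop_map)
  qed
qed auto

type_synonym ('s,'a,'g) atrans = "'s \<times> 'a option \<times> 'g cell \<times> 's \<times> bool \<times> 'g sact"

definition astep :: "('s,'a,'g) atrans set \<Rightarrow> ('s \<times> 'a list \<times> 'g cell list \<times> nat) \<Rightarrow> ('s \<times> 'a list \<times> 'g cell list \<times> nat) \<Rightarrow> bool" where
  "astep D C C' \<longleftrightarrow>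
     (case (C, C') of ((q, w, s, n), (q', w', s', n')) \<Rightarrow>
       n < length s \<and>
       (\<exists>x adv act. (q, x, s ! n, q', adv, act) \<in> D
          \<and> x = (case w of [] \<Rightarrow> None | a # _ \<Rightarrow> Some a)
          \<and> (adv \<longrightarrow> w \<noteq> []) \<and> w' = (if adv then tl w else w)
          \<and> stack_move (s, n) act (s', n')))"

definition encT :: "('s::countable,'a,'g::countable) atrans \<Rightarrow> (nat,'a,nat) atrans" where
  "encT t = (case t of (q, x, c, q', adv, act) \<Rightarrow> (to_nat q, x, map_cell to_nat c, to_nat q', adv, map_act to_nat act))"

definition encC :: "('s::countable \<times> 'a list \<times> 'g::countable cell list \<times> nat) \<Rightarrow> (nat \<times> 'a list \<times> nat cell list \<times> nat)" where
  "encC C = (case C of (q, w, s, n) \<Rightarrow> (to_nat q, w, map (map_cell to_nat) s, n))"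

definition mkA :: "'s::countable set \<Rightarrow> 'g::countable set \<Rightarrow> ('s,'a,'g) atrans set \<Rightarrow> 's \<Rightarrow> 'g \<Rightarrow> 's set \<Rightarrow> 'a nsa" where
  "mkA QS GS D q0 z F = \<lparr>nsa_states = to_nat ` QS, nsa_gamma = to_nat ` GS, nsa_delta = encT ` D,
     nsa_init = to_nat q0, nsa_Z0 = to_nat z, nsa_final = to_nat ` F\<rparr>"

lemma map_act_inj: "inj f \<Longrightarrow> map_act f a = map_act f b \<longleftrightarrow> a = b"
  by (cases a; cases b) (auto simp: inj_map_eq_map)

lemma encT_inj: "encT t = encT t' \<longleftrightarrow> t = t'"
  by (cases t; cases t') (auto simp: encT_def map_cell_inj map_act_inj)

lemma step_enc:
  "nsa_step (mkA QS GS D q0 z F) (encC C) C' \<longleftrightarrow> (\<exists>C''. C' = encC C'' \<and> astep D C C'')"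
proof -
  obtain q w s n where C: "C = (q, w, s, n)" by (cases C) auto
  obtain q' w' s' n' where C': "C' = (q', w', s', n')" by (cases C') auto
  have ic: "inj (to_nat :: 'b \<Rightarrow> nat)" for dummy :: 'b by simp
  show ?thesis
  proof
    assume h0: "nsa_step (mkA QS GS D q0 z F) (encC C) C'"
    have hh: "nsa_step (mkA QS GS D q0 z F) (encC C) C' = (n < length s \<and> (\<exists>x adv act. (to_nat q, x, map (map_cell to_nat) s ! n, q', adv, act) \<in> encT ` D
          \<and> x = (case w of [] \<Rightarrow> None | a # _ \<Rightarrow> Some a)
          \<and> (adv \<longrightarrow> w \<noteq> []) \<and> w' = (if adv then tl w else w)
          \<and> stack_move (map (map_cell to_nat) s, n) act (s', n')))"
      by (simp add: nsa_step_def C C' encC_def mkA_def)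
    from h0[unfolded hh] have n: "n < length s" by (rule conjunct1)
    from h0[unfolded hh] have ex: "\<exists>x adv act. (to_nat q, x, map (map_cell to_nat) s ! n, q', adv, act) \<in> encT ` D
          \<and> x = (case w of [] \<Rightarrow> None | a # _ \<Rightarrow> Some a)
          \<and> (adv \<longrightarrow> w \<noteq> []) \<and> w' = (if adv then tl w else w)
          \<and> stack_move (map (map_cell to_nat) s, n) act (s', n')" by (rule conjunct2)
    from ex obtain x adv act where
      tr: "(to_nat q, x, map (map_cell to_nat) s ! n, q', adv, act) \<in> encT ` D"
      and x: "x = (case w of [] \<Rightarrow> None | a # _ \<Rightarrow> Some a)" and adv: "(adv \<longrightarrow> w \<noteq> [])"
      and w': "w' = (if adv then tl w else w)"
      and sm: "stack_move (map (map_cell to_nat) s, n) act (s', n')"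
      by blast
    from tr obtain t where t: "t \<in> D" "encT t = (to_nat q, x, map_cell to_nat (s ! n), q', adv, act)"
      using n by auto
    then obtain q1 x1 c1 q1' adv1 act1 where tt: "t = (q1, x1, c1, q1', adv1, act1)" by (cases t) auto
    with t have e: "q1 = q" "x1 = x" "c1 = s ! n" "q' = to_nat q1'" "adv1 = adv" "act = map_act to_nat act1"
      by (auto simp: encT_def map_cell_inj)
    from sm obtain s'' where s'': "s' = map (map_cell to_nat) s''" and sm2: "stack_move (s, n) act1 (s'', n')"
      using stack_move_map[of to_nat s n act1 s' n'] e by auto
    have trD: "(q, x, s ! n, q1', adv, act1) \<in> D" using t tt e by simp
    have "astep D C (q1', w', s'', n')"
      unfolding astep_def C using n trD x adv w' sm2 by blast
    moreover have "C' = encC (q1', w', s'', n')" using C' e s'' by (simp add: encC_def)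
    ultimately show "\<exists>C''. C' = encC C'' \<and> astep D C C''" by blast
  next
    assume "\<exists>C''. C' = encC C'' \<and> astep D C C''"
    then obtain q'' s'' where C'': "C' = encC (q'', w', s'', n')" and st: "astep D C (q'', w', s'', n')"
      by (auto simp: C' encC_def split: prod.splits)
    from st obtain x adv act where n: "n < length s" and tr: "(q, x, s ! n, q'', adv, act) \<in> D"
      and x: "x = (case w of [] \<Rightarrow> None | a # _ \<Rightarrow> Some a)" and adv: "(adv \<longrightarrow> w \<noteq> [])"
      and w': "w' = (if adv then tl w else w)"
      and sm: "stack_move (s, n) act (s'', n')"
      by (auto simp: astep_def C)
    have "stack_move (map (map_cell to_nat) s, n) (map_act to_nat act) (map (map_cell to_nat) s'', n')"
      using stack_move_map[of to_nat s n act] sm by auto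
    moreover have "encT (q, x, s ! n, q'', adv, act) \<in> encT ` D" using tr by blast
    moreover have "encT (q, x, s ! n, q'', adv, act) = (to_nat q, x, map (map_cell to_nat) s ! n, to_nat q'', adv, map_act to_nat act)"
      using n by (simp add: encT_def)
    ultimately have "(to_nat q, x, map (map_cell to_nat) s ! n, to_nat q'', adv, map_act to_nat act) \<in> nsa_delta (mkA QS GS D q0 z F)"
      "stack_move (map (map_cell to_nat) s, n) (map_act to_nat act) (map (map_cell to_nat) s'', n')"
      by (auto simp: mkA_def)
    then show "nsa_step (mkA QS GS D q0 z F) (encC C) C'"
      unfolding nsa_step_def C C'' encC_def prod.case using n x adv w' by auto
  qed
qed

lemma steps_enc1:
  "(nsa_step (mkA QS GS D q0 z F))\<^sup>*\<^sup>* (encC C) C' \<Longrightarrow> \<exists>C''. C' = encC C'' \<and> (astep D)\<^sup>*\<^sup>* C C''"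
proof (induct rule: rtranclp_induct)
  case base then show ?case by blast
next
  case (step y z)
  then obtain C'' where "y = encC C''" "(astep D)\<^sup>*\<^sup>* C C''" by auto
  with step(2) show ?case using step_enc by (metis rtranclp.rtrancl_into_rtrancl)
qed

lemma steps_enc2:
  "(astep D)\<^sup>*\<^sup>* C C'' \<Longrightarrow> (nsa_step (mkA QS GS D q0 z F))\<^sup>*\<^sup>* (encC C) (encC C'')"
proof (induct rule: rtranclp_induct)
  case base then show ?case by auto
next
  case (step y z)
  then show ?case using step_enc by (metis rtranclp.rtrancl_into_rtrancl)
qed

definition alang :: "('s,'a,'g) atrans set \<Rightarrow> 's \<Rightarrow> 'g \<Rightarrow> 's set \<Rightarrow> 'a list set" where
  "alang D q0 z F = {w. \<exists>q s n. (astep D)\<^sup>*\<^sup>* (q0, w, [SBot, SCell z, STop], 1) (q, [], s, n) \<and> q \<in> F}"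

lemma lang_enc: "nsa_lang (mkA QS GS D q0 z F) = alang D q0 z F"
proof -
  have i: "encC (q0, w, [SBot, SCell z, STop], 1) = (to_nat q0, w, [SBot, SCell (to_nat z), STop], 1)" for w
    by (simp add: encC_def)
  show ?thesis
    unfolding nsa_lang_def alang_def
  proof (intro set_eqI iffI; simp)
    fix w assume "\<exists>q. (\<exists>s n. (nsa_step (mkA QS GS D q0 z F))\<^sup>*\<^sup>* (nsa_init (mkA QS GS D q0 z F), w, [SBot, SCell (nsa_Z0 (mkA QS GS D q0 z F)), STop], Suc 0) (q, [], s, n)) \<and> q \<in> nsa_final (mkA QS GS D q0 z F)"
    then obtain q s n where r0: "(nsa_step (mkA QS GS D q0 z F))\<^sup>*\<^sup>* (nsa_init (mkA QS GS D q0 z F), w, [SBot, SCell (nsa_Z0 (mkA QS GS D q0 z F)), STop], Suc 0) (q, [], s, n)"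
      and f0: "q \<in> nsa_final (mkA QS GS D q0 z F)" by blast
    have r: "(nsa_step (mkA QS GS D q0 z F))\<^sup>*\<^sup>* (encC (q0, w, [SBot, SCell z, STop], 1)) (q, [], s, n)"
      using r0 by (simp add: encC_def mkA_def)
    have f: "q \<in> to_nat ` F" using f0 by (simp add: mkA_def)
    from steps_enc1[OF r] obtain C'' where "(q, [], s, n) = encC C''" "(astep D)\<^sup>*\<^sup>* (q0, w, [SBot, SCell z, STop], 1) C''" by auto
    moreover obtain q1 w1 s1 n1 where "C'' = (q1, w1, s1, n1)" by (cases C'') auto
    ultimately show "\<exists>q. (\<exists>s n. (astep D)\<^sup>*\<^sup>* (q0, w, [SBot, SCell z, STop], Suc 0) (q, [], s, n)) \<and> q \<in> F"
      using f by (auto simp: encC_def inj_image_mem_iff)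
  next
    fix w assume "\<exists>q. (\<exists>s n. (astep D)\<^sup>*\<^sup>* (q0, w, [SBot, SCell z, STop], Suc 0) (q, [], s, n)) \<and> q \<in> F"
    then obtain q s n where r: "(astep D)\<^sup>*\<^sup>* (q0, w, [SBot, SCell z, STop], 1) (q, [], s, n)" and "q \<in> F" by auto
    from steps_enc2[OF r, of QS GS q0 z F] this(2)
    show "\<exists>q. (\<exists>s n. (nsa_step (mkA QS GS D q0 z F))\<^sup>*\<^sup>* (nsa_init (mkA QS GS D q0 z F), w, [SBot, SCell (nsa_Z0 (mkA QS GS D q0 z F)), STop], Suc 0) (q, [], s, n)) \<and> q \<in> nsa_final (mkA QS GS D q0 z F)"
      by (auto simp: mkA_def i encC_def)
  qed
qed

fun cells_of :: "'g set \<Rightarrow> 'g cell set" where "cells_of G = {SBot, SCent, STop} \<union> SCell ` G"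

lemma is_nsa_mkA:
  assumes "finite QS" "finite GS" "finite D" "q0 \<in> QS" "z \<in> GS" "F \<subseteq> QS"
    "\<And>q x c q' adv act. (q, x, c, q', adv, act) \<in> D \<Longrightarrow> q \<in> QS \<and> q' \<in> QS \<and> cell_syms c \<subseteq> GS \<and> sact_syms act \<subseteq> GS"
  shows "is_nsa (mkA QS GS D q0 z F)"
  using assms unfolding is_nsa_def mkA_def
  apply (auto simp: encT_def)
  subgoal for q x c q' adv act by (cases c) fastforce+
  subgoal for q x c q' adv act by (cases act) fastforce+
  done



datatype 'a item = It "'a rewb" | ClI nat

definition opt :: "'b option \<Rightarrow> 'b list" where "opt e = (case e of None \<Rightarrow> [] | Some x \<Rightarrow> [x])"

inductive gstep :: "'a item list \<Rightarrow> 'a sym option \<Rightarrow> 'a item list \<Rightarrow> bool" where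
  gsym: "gstep (It (RSym a) # r) (Some (Ch a)) r"
| geps: "gstep (It REps # r) None r"
| gref: "gstep (It (RRef i) # r) (Some (Num i)) r"
| gcat: "gstep (It (RCat a b) # r) None (It a # It b # r)"
| galt1: "gstep (It (RAlt a b) # r) None (It a # r)"
| galt2: "gstep (It (RAlt a b) # r) None (It b # r)"
| gstar1: "gstep (It (RStar a) # r) None r"
| gstar2: "gstep (It (RStar a) # r) None (It a # It (RStar a) # r)"
| gcap: "gstep (It (RCap j a) # r) (Some (Opn j)) (It a # ClI j # r)"
| gcls: "gstep (ClI j # r) (Some (Cls j)) r"

inductive gsteps :: "'a item list \<Rightarrow> 'a sym list \<Rightarrow> 'a item list \<Rightarrow> bool" where
  gs_refl: "gsteps r [] r"
| gs_step: "gstep r e r' \<Longrightarrow> gsteps r' u r'' \<Longrightarrow> gsteps r (opt e @ u) r''"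

lemma gsteps_trans: "gsteps r u r' \<Longrightarrow> gsteps r' v r'' \<Longrightarrow> gsteps r (u @ v) r''"
  by (induct rule: gsteps.induct) (auto intro: gsteps.intros)

lemma gsteps_snoc: "gsteps r u r' \<Longrightarrow> gstep r' e r'' \<Longrightarrow> gsteps r (u @ opt e) r''"
  using gsteps_trans[of r u r' "opt e" r''] gs_step[of r' e r'' "[]" r''] gs_refl[of r'']
  by auto

fun tlang :: "'a item list \<Rightarrow> 'a sym list set" where
  "tlang [] = {[]}"
| "tlang (It a # r) = {u @ v |u v. u \<in> rlang a \<and> v \<in> tlang r}"
| "tlang (ClI j # r) = {Cls j # v |v. v \<in> tlang r}"

lemma gsteps_suffix_aux:
  "u \<in> rlang a \<Longrightarrow> gsteps (It a # r) u r"
proof (induct a arbitrary: u r)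
  case (RSym x) then show ?case using gs_step[OF gsym gs_refl] by (auto simp: opt_def)
next
  case REps then show ?case using gs_step[OF geps gs_refl] by (auto simp: opt_def)
next
  case (RRef x) then show ?case using gs_step[OF gref gs_refl] by (auto simp: opt_def)
next
  case (RCat a b)
  then obtain u1 u2 where u: "u = u1 @ u2" "u1 \<in> rlang a" "u2 \<in> rlang b" by auto
  have "gsteps (It a # It b # r) (u1 @ u2) r"
    using gsteps_trans[OF RCat(1)[OF u(2)] RCat(2)[OF u(3)]] .
  then show ?case using gs_step[OF gcat] u by (fastforce simp: opt_def)
next
  case (RAlt a b)
  then show ?case using gs_step[OF galt1] gs_step[OF galt2] by (fastforce simp: opt_def)
next
  case (RStar a)
  from RStar(2) have "u \<in> kstar (rlang a)" by simp
  then show ?case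
  proof (induct rule: kstar.induct)
    case kstar_nil then show ?case using gs_step[OF gstar1 gs_refl] by (auto simp: opt_def)
  next
    case (kstar_app u v)
    have "gsteps (It a # It (RStar a) # r) (u @ v) r"
      using gsteps_trans[OF RStar(1)[OF kstar_app(1)] kstar_app(3)] .
    then show ?case using gs_step[OF gstar2] by (fastforce simp: opt_def)
  qed
next
  case (RCap j a)
  then obtain v where u: "u = [Opn j] @ v @ [Cls j]" "v \<in> rlang a" by auto
  have "gsteps (It a # ClI j # r) (v @ [Cls j]) r"
    using gsteps_trans[OF RCap(1)[OF u(2)] gs_step[OF gcls gs_refl]] by (simp add: opt_def)
  then show ?case using gs_step[OF gcap] u by (fastforce simp: opt_def)
qed

lemma tlang_gsteps: "u \<in> tlang r \<Longrightarrow> gsteps r u []"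
proof (induct r arbitrary: u)
  case Nil then show ?case by (auto intro: gs_refl)
next
  case (Cons x r)
  show ?case
  proof (cases x)
    case (It a)
    with Cons obtain u1 u2 where "u = u1 @ u2" "u1 \<in> rlang a" "u2 \<in> tlang r" by auto
    then show ?thesis using gsteps_trans[OF gsteps_suffix_aux Cons(1)] It by auto
  next
    case (ClI j)
    with Cons obtain v where "u = Cls j # v" "v \<in> tlang r" by auto
    then show ?thesis using gs_step[OF gcls Cons(1)] ClI by (auto simp: opt_def)
  qed
qed

lemma kstar_conc: "u \<in> kstar A \<Longrightarrow> v \<in> kstar A \<Longrightarrow> u @ v \<in> kstar A"
  by (induct rule: kstar.induct) (auto intro: kstar.intros)

lemma gstep_tlang: "gstep r e r' \<Longrightarrow> v \<in> tlang r' \<Longrightarrow> opt e @ v \<in> tlang r"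
proof (induct rule: gstep.induct)
  case (gsym a r) then show ?case by (force simp: opt_def)
next
  case (geps r) then show ?case by (force simp: opt_def)
next
  case (gref i r) then show ?case by (force simp: opt_def)
next
  case (gcat a b r)
  then obtain v1 v2 v3 where "v = v1 @ v2 @ v3" "v1 \<in> rlang a" "v2 \<in> rlang b" "v3 \<in> tlang r" by auto
  then show ?case by (simp add: opt_def) (metis (mono_tags, lifting) append.assoc mem_Collect_eq)
next
  case (galt1 a b r) then show ?case by (force simp: opt_def)
next
  case (galt2 a b r) then show ?case by (force simp: opt_def)
next
  case (gstar1 a r)
  then show ?case by (simp add: opt_def) (metis append_Nil kstar.kstar_nil)
next
  case (gstar2 a r)
  then obtain v1 v2 v3 where "v = v1 @ v2 @ v3" "v1 \<in> rlang a" "v2 \<in> kstar (rlang a)" "v3 \<in> tlang r" by auto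
  then have "v1 @ v2 \<in> kstar (rlang a)" by (auto intro: kstar.intros)
  then show ?case using \<open>v = v1 @ v2 @ v3\<close> \<open>v3 \<in> tlang r\<close>
    by (simp add: opt_def) (metis append.assoc)
next
  case (gcap j a r)
  then obtain v1 v2 where "v = v1 @ Cls j # v2" "v1 \<in> rlang a" "v2 \<in> tlang r" by auto
  then show ?case
    by (simp add: opt_def) (rule exI[of _ "Opn j # v1 @ [Cls j]"], auto)
next
  case (gcls j r) then show ?case by (force simp: opt_def)
qed

lemma gsteps_tlang: "gsteps r u r' \<Longrightarrow> r' = [] \<Longrightarrow> u \<in> tlang r"
  by (induct rule: gsteps.induct) (auto intro: gstep_tlang)

theorem gsteps_rlang: "gsteps [It a] u [] \<longleftrightarrow> u \<in> rlang a"
proof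
  assume "gsteps [It a] u []"
  then have "u \<in> tlang [It a]" using gsteps_tlang by blast
  then show "u \<in> rlang a" by auto
next
  assume "u \<in> rlang a" then show "gsteps [It a] u []" using gsteps_suffix_aux by blast
qed

section \<open>Finite set of reachable todo lists\<close>

fun RR :: "'a rewb \<Rightarrow> 'a item list set" where
  "RR (RSym a) = {[It (RSym a)], []}"
| "RR REps = {[It REps], []}"
| "RR (RRef i) = {[It (RRef i)], []}"
| "RR (RCat a b) = {[It (RCat a b)]} \<union> {l @ [It b] |l. l \<in> RR a} \<union> RR b"
| "RR (RAlt a b) = {[It (RAlt a b)]} \<union> RR a \<union> RR b"
| "RR (RStar a) = {[It (RStar a)], []} \<union> {l @ [It (RStar a)] |l. l \<in> RR a}"
| "RR (RCap j a) = {[It (RCap j a)], []} \<union> {l @ [ClI j] |l. l \<in> RR a}"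

lemma RR_nil: "[] \<in> RR a"
  by (induct a) auto

lemma RR_top: "[It a] \<in> RR a"
  by (cases a) auto

lemma finite_RR: "finite (RR a)"
proof (induct a)
  case (RCat a b)
  have "{l @ [It b] |l. l \<in> RR a} = (\<lambda>l. l @ [It b]) ` RR a" by auto
  then show ?case using RCat by simp
next
  case (RStar a)
  have "{l @ [It (RStar a)] |l. l \<in> RR a} = (\<lambda>l. l @ [It (RStar a)]) ` RR a" by auto
  then show ?case using RStar by simp
next
  case (RCap j a)
  have "{l @ [ClI j] |l. l \<in> RR a} = (\<lambda>l. l @ [ClI j]) ` RR a" by auto
  then show ?case using RCap by simp
qed auto

lemma RR_step:
  "l \<in> RR a \<Longrightarrow> l \<noteq> [] \<Longrightarrow> gstep (l @ rest) e r' \<Longrightarrow> \<exists>l' \<in> RR a. r' = l' @ rest"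
proof (induct a arbitrary: l rest)
  case (RSym x) then show ?case by (auto elim: gstep.cases intro: RR_nil)
next
  case REps then show ?case by (auto elim: gstep.cases)
next
  case (RRef x) then show ?case by (auto elim: gstep.cases)
next
  case (RCat a b)
  from RCat(3) consider "l = [It (RCat a b)]" | l1 where "l = l1 @ [It b]" "l1 \<in> RR a" | "l \<in> RR b" by auto
  then show ?case
  proof cases
    case 1 then show ?thesis using RCat(5)
      by (auto elim!: gstep.cases intro!: bexI[of _ "[It a] @ [It b]"] RR_top)
  next
    case 2
    show ?thesis
    proof (cases "l1 = []")
      case True
      then have "[It b] \<in> RR b" by (simp add: RR_top)
      from RCat(2)[OF this _ ] RCat(5) 2 True show ?thesis by auto
    next
      case False
      from RCat(1)[OF 2(2) False, of "It b # rest"] RCat(5) 2 obtain l' where "l' \<in> RR a" "r' = l' @ It b # rest" by auto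
      then show ?thesis by (intro bexI[of _ "l' @ [It b]"]) auto
    qed
  next
    case 3 from RCat(2)[OF 3 RCat(4) RCat(5)] show ?thesis by auto
  qed
next
  case (RAlt a b)
  from RAlt(3) consider "l = [It (RAlt a b)]" | "l \<in> RR a" | "l \<in> RR b" by auto
  then show ?case
  proof cases
    case 1 then show ?thesis using RAlt(5) RR_top[of a] RR_top[of b]
      by (auto elim!: gstep.cases)
  next
    case 2 from RAlt(1)[OF 2 RAlt(4) RAlt(5)] show ?thesis by auto
  next
    case 3 from RAlt(2)[OF 3 RAlt(4) RAlt(5)] show ?thesis by auto
  qed
next
  case (RStar a)
  from RStar(2,3) consider "l = [It (RStar a)]" | l1 where "l = l1 @ [It (RStar a)]" "l1 \<in> RR a" by auto
  then show ?case
  proof cases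
    case 1 then show ?thesis using RStar(4)
      by (auto elim!: gstep.cases intro: bexI[of _ "[It a] @ [It (RStar a)]"] RR_top)
  next
    case 2
    show ?thesis
    proof (cases "l1 = []")
      case True
      then show ?thesis using RStar(4) 2
        by (auto elim!: gstep.cases intro: bexI[of _ "[It a] @ [It (RStar a)]"] RR_top)
    next
      case False
      from RStar(1)[OF 2(2) False, of "It (RStar a) # rest"] RStar(4) 2 obtain l' where "l' \<in> RR a" "r' = l' @ It (RStar a) # rest" by auto
      then show ?thesis by (intro bexI[of _ "l' @ [It (RStar a)]"]) auto
    qed
  qed
next
  case (RCap j a)
  from RCap(2,3) consider "l = [It (RCap j a)]" | l1 where "l = l1 @ [ClI j]" "l1 \<in> RR a" by auto
  then show ?case
  proof cases
    case 1 then show ?thesis using RCap(4)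
      by (auto elim!: gstep.cases intro: bexI[of _ "[It a] @ [ClI j]"] RR_top)
  next
    case 2
    show ?thesis
    proof (cases "l1 = []")
      case True
      then show ?thesis using RCap(4) 2 RR_nil[of "RCap j a"]
        by (auto elim!: gstep.cases)
    next
      case False
      from RCap(1)[OF 2(2) False, of "ClI j # rest"] RCap(4) 2 obtain l' where "l' \<in> RR a" "r' = l' @ ClI j # rest" by auto
      then show ?thesis by (intro bexI[of _ "l' @ [ClI j]"]) auto
    qed
  qed
qed

lemma RR_closed: "r \<in> RR a \<Longrightarrow> gstep r e r' \<Longrightarrow> r' \<in> RR a"
  using RR_step[of r a "[]" e r'] by (cases "r = []") (auto elim: gstep.cases)

lemma RR_gsteps: "gsteps r u r' \<Longrightarrow> r \<in> RR a \<Longrightarrow> r' \<in> RR a"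
  by (induct rule: gsteps.induct) (auto intro: RR_closed)

fun labs :: "'a rewb \<Rightarrow> nat set" where
  "labs (RSym a) = {}"
| "labs REps = {}"
| "labs (RRef i) = {i}"
| "labs (RCat a b) = labs a \<union> labs b"
| "labs (RAlt a b) = labs a \<union> labs b"
| "labs (RStar a) = labs a"
| "labs (RCap j a) = insert j (labs a)"

lemma finite_labs: "finite (labs a)" by (induct a) auto

fun ilabs :: "'a item \<Rightarrow> nat set" where
  "ilabs (It a) = labs a" | "ilabs (ClI j) = {j}"

fun slab :: "'a sym \<Rightarrow> nat set" where
  "slab (Ch a) = {}" | "slab (Opn j) = {j}" | "slab (Cls j) = {j}" | "slab (Num j) = {j}"

lemma gstep_labs: "gstep r e r' \<Longrightarrow> (\<Union>x\<in>set r. ilabs x) \<subseteq> L \<Longrightarrow>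
   (\<Union>x\<in>set r'. ilabs x) \<subseteq> L \<and> (\<Union>x\<in>set (opt e). slab x) \<subseteq> L"
  by (induct rule: gstep.induct) (auto simp: opt_def)

lemma gsteps_labs: "gsteps r u r' \<Longrightarrow> (\<Union>x\<in>set r. ilabs x) \<subseteq> L \<Longrightarrow>
   (\<Union>x\<in>set r'. ilabs x) \<subseteq> L \<and> (\<Union>x\<in>set u. slab x) \<subseteq> L"
proof (induct rule: gsteps.induct)
  case (gs_step r e r' u r'')
  then show ?case using gstep_labs[OF gs_step(1)] by auto
qed auto



fun oapp :: "'b list option \<Rightarrow> 'b list option \<Rightarrow> 'b list option" where
  "oapp (Some x) (Some y) = Some (x @ y)"
| "oapp _ _ = None"

lemma oapp_assoc: "oapp (oapp x y) z = oapp x (oapp y z)"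
  by (cases x; cases y; cases z) auto

lemma oapp_Some_iff: "oapp x y = Some z \<longleftrightarrow> (\<exists>a b. x = Some a \<and> y = Some b \<and> z = a @ b)"
  by (cases x; cases y) auto

lemma oapp_None[simp]: "oapp x y = None \<longleftrightarrow> x = None \<or> y = None"
  by (cases x; cases y) auto

lemma oapp_Nil[simp]: "oapp (Some []) y = y" "oapp y (Some []) = y"
  by (cases y; simp)+

fun lo :: "nat \<Rightarrow> 'a sym list \<Rightarrow> nat option" where
  "lo j [] = None"
| "lo j (x # l) = (case lo j l of Some q \<Rightarrow> Some (Suc q) | None \<Rightarrow> if x = Opn j then Some 0 else None)"

lemma lo_snoc: "lo j (l @ [x]) = (if x = Opn j then Some (length l) else lo j l)"
  by (induct l) (auto split: option.splits)

lemma lo_None: "lo j l = None \<longleftrightarrow> Opn j \<notin> set l"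
  by (induct l) (auto split: option.splits)

lemma lo_Some: "lo j l = Some q \<Longrightarrow> q < length l \<and> l ! q = Opn j \<and> (\<forall>q'. q < q' \<and> q' < length l \<longrightarrow> l ! q' \<noteq> Opn j)"
proof (induct l arbitrary: q rule: rev_induct)
  case Nil then show ?case by simp
next
  case (snoc x l)
  then show ?case
    by (auto simp: lo_snoc nth_append split: if_splits)
qed

lemma lo_take_Suc: "t < length h \<Longrightarrow> lo j (take (Suc t) h) = (if h ! t = Opn j then Some t else lo j (take t h))"
  by (simp add: take_Suc_conv_app_nth lo_snoc)

function rd :: "'a sym list \<Rightarrow> nat \<Rightarrow> nat \<Rightarrow> nat \<Rightarrow> 'a list option" where
  "rd h i n m = (if m \<le> n \<or> length h \<le> n then None else
     (case h ! n of
        Ch a \<Rightarrow> map_option ((#) a) (rd h i (Suc n) m)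
      | Opn j \<Rightarrow> rd h i (Suc n) m
      | Cls j \<Rightarrow> (if j = i then Some [] else rd h i (Suc n) m)
      | Num j \<Rightarrow> oapp (case lo j (take n h) of None \<Rightarrow> Some [] | Some q \<Rightarrow> rd h j (Suc q) n) (rd h i (Suc n) m)))"
  by pat_completeness auto
termination
  by (relation "measures [\<lambda>(h,i,n,m). m, \<lambda>(h,i,n,m). m - n]") auto

declare rd.simps[simp del]

definition vl :: "'a sym list \<Rightarrow> nat \<Rightarrow> nat \<Rightarrow> 'a list option" where
  "vl h j k = (case lo j (take k h) of None \<Rightarrow> Some [] | Some q \<Rightarrow> rd h j (Suc q) k)"

lemma rd_unfold: "n < m \<Longrightarrow> n < length h \<Longrightarrow> rd h i n m = (case h ! n of
        Ch a \<Rightarrow> map_option ((#) a) (rd h i (Suc n) m)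
      | Opn j \<Rightarrow> rd h i (Suc n) m
      | Cls j \<Rightarrow> (if j = i then Some [] else rd h i (Suc n) m)
      | Num j \<Rightarrow> oapp (vl h j n) (rd h i (Suc n) m))"
  by (subst rd.simps) (simp add: vl_def split: sym.split)

lemma rd_empty: "m \<le> n \<Longrightarrow> rd h i n m = None"
  by (subst rd.simps) auto

lemma rd_prefix: "m \<le> length h \<Longrightarrow> rd (h @ h') i n m = rd h i n m"
proof (induct h i n m rule: rd.induct)
  case (1 h i n m)
  show ?case
  proof (cases "m \<le> n")
    case True then show ?thesis by (simp add: rd_empty)
  next
    case False
    then have nl: "n < length h" using "1.prems" by auto
    have tk: "take n (h @ h') = take n h" using nl by simp
    show ?thesis
      using False nl 1(1-5) "1.prems"
      by (subst (1 2) rd.simps) (auto simp: nth_append tk split: sym.splits option.splits)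
  qed
qed

lemma vl_prefix: "k \<le> length h \<Longrightarrow> vl (h @ h') j k = vl h j k"
  by (simp add: vl_def rd_prefix split: option.splits)

definition pc :: "'a sym list \<Rightarrow> nat \<Rightarrow> 'a list option" where
  "pc h k = (case h ! k of Ch a \<Rightarrow> Some [a] | Num j \<Rightarrow> vl h j k | _ \<Rightarrow> Some [])"

fun outk :: "'a sym list \<Rightarrow> nat \<Rightarrow> 'a list option" where
  "outk h 0 = Some []"
| "outk h (Suc k) = oapp (outk h k) (pc h k)"

definition out :: "'a sym list \<Rightarrow> 'a list option" where "out h = outk h (length h)"

lemma pc_prefix: "k < length h \<Longrightarrow> pc (h @ h') k = pc h k"
  by (simp add: pc_def nth_append vl_prefix split: sym.splits)

lemma outk_prefix: "k \<le> length h \<Longrightarrow> outk (h @ h') k = outk h k"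
  by (induct k) (auto simp: pc_prefix)

lemma out_snoc: "out (h @ [x]) = oapp (out h) (pc (h @ [x]) (length h))"
  by (simp add: out_def outk_prefix)

lemma pc_snoc: "pc (h @ [x]) (length h) = (case x of Ch a \<Rightarrow> Some [a] | Num j \<Rightarrow> vl h j (length h) | _ \<Rightarrow> Some [])"
  using vl_prefix[of "length h" h "[x]"] by (cases x) (simp_all add: pc_def)

lemma outk_None_mono: "outk h k = None \<Longrightarrow> k \<le> k' \<Longrightarrow> outk h k' = None"
  by (induct k' ) (auto simp: le_Suc_eq)

lemma outk_Some_pc: "outk h k \<noteq> None \<Longrightarrow> k' < k \<Longrightarrow> pc h k' \<noteq> None"
proof (induct k)
  case (Suc k)
  then show ?case by (cases "outk h k"; cases "pc h k") (auto simp: less_Suc_eq)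
qed simp

section \<open>Equivalence with deref\<close>

definition epc :: "'a sym list \<Rightarrow> nat \<Rightarrow> 'a sym list" where
  "epc h k = (case h ! k of Num j \<Rightarrow> map Ch (the (vl h j k)) | x \<Rightarrow> [x])"

definition Ek :: "'a sym list \<Rightarrow> nat \<Rightarrow> 'a sym list" where
  "Ek h k = concat (map (epc h) [0..<k])"

lemma gh_append[simp]: "gh (x @ y) = gh x @ gh y" by (simp add: gh_def)
lemma gh_Nil[simp]: "gh [] = []" by (simp add: gh_def)
lemma gh_Cons: "gh (x # y) = (case x of Ch a \<Rightarrow> [a] | _ \<Rightarrow> []) @ gh y" by (simp add: gh_def)
lemma gh_map_Ch[simp]: "gh (map Ch v) = v" by (induct v) (auto simp: gh_def)

lemma outk_gh: "outk h k \<noteq> None \<Longrightarrow> k \<le> length h \<Longrightarrow> outk h k = Some (gh (Ek h k))"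
proof (induct k)
  case 0 then show ?case by (simp add: Ek_def)
next
  case (Suc k)
  then obtain X P where X: "outk h k = Some X" "pc h k = Some P"
    by (cases "outk h k"; cases "pc h k") auto
  with Suc have "X = gh (Ek h k)" by auto
  moreover have "gh (epc h k) = P" using X(2)
    by (cases "h ! k") (auto simp: pc_def epc_def gh_Cons)
  ultimately show ?case using X by (simp add: Ek_def)
qed

lemma rd_region:
  assumes "\<forall>k'<m. pc h k' \<noteq> None" "m \<le> length h"
  shows "n \<le> m \<Longrightarrow> rd h i n m = (if Cls i \<in> set (map ((!) h) [n..<m])
            then Some (gh (takeWhile (\<lambda>x. x \<noteq> Cls i) (concat (map (epc h) [n..<m])))) else None)"
proof (induct "m - n" arbitrary: n)
  case 0 then show ?case by (simp add: rd_empty)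
next
  case (Suc d)
  then have nm: "n < m" and nl: "n < length h" using assms(2) by auto
  have IH: "rd h i (Suc n) m = (if Cls i \<in> set (map ((!) h) [Suc n..<m])
            then Some (gh (takeWhile (\<lambda>x. x \<noteq> Cls i) (concat (map (epc h) [Suc n..<m])))) else None)"
    using Suc by auto
  have up: "[n..<m] = n # [Suc n..<m]" using nm by (simp add: upt_conv_Cons)
  show ?case
  proof (cases "h ! n")
    case (Ch a)
    then show ?thesis using nm nl IH by (simp add: rd_unfold up epc_def gh_Cons)
  next
    case (Opn j)
    then show ?thesis using nm nl IH by (simp add: rd_unfold up epc_def gh_Cons)
  next
    case (Cls j)
    then show ?thesis using nm nl IH by (simp add: rd_unfold up epc_def gh_Cons)
  next
    case (Num j)
    then obtain V where V: "vl h j n = Some V" using assms(1) nm by (auto simp: pc_def)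
    have tw: "takeWhile (\<lambda>x. x \<noteq> Cls i) (map Ch V @ z) = map Ch V @ takeWhile (\<lambda>x. x \<noteq> Cls i) z" for z
      by (induct V) auto
    show ?thesis using Num nm nl IH V
      by (simp add: rd_unfold up epc_def tw split: option.splits)
  qed
qed

lemma Ek_split:
  assumes "q < k"
  shows "Ek h k = Ek h q @ epc h q @ concat (map (epc h) [Suc q..<k])"
proof -
  have "[0..<k] = [0..<q] @ q # [Suc q..<k]" using assms
    by (metis less_Suc_eq_0_disj less_Suc_eq_le less_imp_add_positive upt_add_eq_append upt_conv_Cons)
  then show ?thesis by (simp add: Ek_def)
qed

lemma Opn_in_epc: "Opn j \<in> set (epc h k) \<longleftrightarrow> h ! k = Opn j"
  by (auto simp: epc_def split: sym.splits)

lemma Cls_in_epc: "Cls j \<in> set (epc h k) \<longleftrightarrow> h ! k = Cls j"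
  by (auto simp: epc_def split: sym.splits)

lemma Opn_in_Ek: "k \<le> length h \<Longrightarrow> Opn j \<in> set (Ek h k) \<longleftrightarrow> Opn j \<in> set (take k h)"
proof -
  assume kl: "k \<le> length h"
  have "Opn j \<in> set (Ek h k) \<longleftrightarrow> (\<exists>x<k. h ! x = Opn j)" by (auto simp: Ek_def Opn_in_epc)
  also have "\<dots> \<longleftrightarrow> Opn j \<in> set (take k h)" using kl
    by (auto simp: in_set_conv_nth)
  finally show ?thesis .
qed

lemma rev_tw_split:
  assumes "x \<notin> set c"
  shows "rev (takeWhile (\<lambda>y. y \<noteq> x) (rev (a @ [x] @ c))) = c"
proof -
  have "takeWhile (\<lambda>y. y \<noteq> x) (rev c @ x # rev a) = rev c"
    using assms by (subst takeWhile_append2) auto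
  then show ?thesis by simp
qed

lemma deref_aux_Ek:
  assumes "k \<le> length h" "outk h k \<noteq> None"
  shows "deref_aux (Ek h k) (drop k h) = out h"
  using assms
proof (induct "length h - k" arbitrary: k)
  case 0
  then have "k = length h" by simp
  then show ?case using outk_gh[OF 0(3)] 0 by (simp add: out_def)
next
  case (Suc d)
  then have kl: "k < length h" by auto
  have dr: "drop k h = h ! k # drop (Suc k) h" using kl by (simp add: Cons_nth_drop_Suc)
  have EkS: "Ek h (Suc k) = Ek h k @ epc h k" by (simp add: Ek_def)
  show ?case
  proof (cases "outk h (Suc k)")
    case None
    then have oN: "out h = None" unfolding out_def using outk_None_mono[OF None, of "length h"] kl by auto
    then obtain j where Num: "h ! k = Num j" and vN: "vl h j k = None"
      using None Suc(4) by (cases "h ! k"; cases "outk h k") (auto simp: pc_def)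
    have "\<forall>k'<k. pc h k' \<noteq> None" using outk_Some_pc[OF Suc(4)] by auto
    note reg = rd_region[OF this less_imp_le_nat[OF kl]]
    show ?thesis
    proof (cases "lo j (take k h)")
      case None then show ?thesis using vN by (simp add: vl_def)
    next
      case (Some q)
      note lq = lo_Some[OF Some]
      then have qk: "q < k" and hq: "h ! q = Opn j" and nq: "\<forall>q'. q < q' \<and> q' < k \<longrightarrow> h ! q' \<noteq> Opn j"
        using kl by auto
      have rdN: "rd h j (Suc q) k = None" using vN Some by (simp add: vl_def)
      have noC: "Cls j \<notin> set (map ((!) h) [Suc q..<k])"
        using reg[of "Suc q" j] rdN qk by (auto split: if_splits)
      have noO: "Opn j \<notin> set (concat (map (epc h) [Suc q..<k]))"
        using nq by (auto simp: Opn_in_epc)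
      have p2: "rev (takeWhile (\<lambda>x. x \<noteq> Opn j) (rev (Ek h k))) = concat (map (epc h) [Suc q..<k])"
        using rev_tw_split[OF noO, of "Ek h q"] Ek_split[OF qk, of h] hq by (simp add: epc_def)
      have "Cls j \<notin> set (concat (map (epc h) [Suc q..<k]))"
        using noC by (auto simp: Cls_in_epc image_iff)
      moreover have "Opn j \<in> set (Ek h k)" using Ek_split[OF qk, of h] hq by (simp add: epc_def)
      ultimately show ?thesis using dr Num p2 oN by (simp add: Let_def)
    qed
  next
    case (Some Y)
    have IH: "deref_aux (Ek h (Suc k)) (drop (Suc k) h) = out h"
      using Suc(1)[of "Suc k"] Suc(2) kl Some by (auto simp: oapp_Some_iff)
    show ?thesis
    proof (cases "h ! k")
      case (Num j)
      obtain V where vS: "vl h j k = Some V" using Some Num by (cases "outk h k"; cases "vl h j k") (auto simp: pc_def)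
      have EkS': "Ek h (Suc k) = Ek h k @ map Ch V" using EkS Num vS by (simp add: epc_def)
      have pcs: "\<forall>k'<k. pc h k' \<noteq> None" using outk_Some_pc[OF Suc(4)] by auto
      note reg = rd_region[OF pcs less_imp_le_nat[OF kl]]
      show ?thesis
      proof (cases "lo j (take k h)")
        case None
        then have "Opn j \<notin> set (Ek h k)" using Opn_in_Ek[of k h j] kl lo_None by auto
        moreover have "V = []" using vS None by (simp add: vl_def)
        ultimately show ?thesis using dr Num IH EkS' by simp
      next
        case (Some q)
        note lq = lo_Some[OF Some]
        then have qk: "q < k" and hq: "h ! q = Opn j" and nq: "\<forall>q'. q < q' \<and> q' < k \<longrightarrow> h ! q' \<noteq> Opn j"
          using kl by auto
        have rdS: "rd h j (Suc q) k = Some V" using vS Some by (simp add: vl_def)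
        have rr: "rd h j (Suc q) k = (if Cls j \<in> set (map ((!) h) [Suc q..<k])
            then Some (gh (takeWhile (\<lambda>x. x \<noteq> Cls j) (concat (map (epc h) [Suc q..<k])))) else None)"
          using reg[of "Suc q" j] kl qk by auto
        have C: "Cls j \<in> set (map ((!) h) [Suc q..<k])" and
          V: "V = gh (takeWhile (\<lambda>x. x \<noteq> Cls j) (concat (map (epc h) [Suc q..<k])))"
          using rr rdS by (auto split: if_splits)
        have noO: "Opn j \<notin> set (concat (map (epc h) [Suc q..<k]))"
          using nq by (auto simp: Opn_in_epc)
        have p2: "rev (takeWhile (\<lambda>x. x \<noteq> Opn j) (rev (Ek h k))) = concat (map (epc h) [Suc q..<k])"
          using rev_tw_split[OF noO, of "Ek h q"] Ek_split[OF qk, of h] hq by (simp add: epc_def)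
        have "Cls j \<in> set (concat (map (epc h) [Suc q..<k]))"
          using C by (auto simp: Cls_in_epc image_iff)
        moreover have "Opn j \<in> set (Ek h k)" using Ek_split[OF qk, of h] hq by (simp add: epc_def)
        ultimately show ?thesis using dr Num p2 IH EkS' V by (simp add: Let_def)
      qed
    next
      case (Ch a) then show ?thesis using dr IH EkS by (simp add: epc_def)
    next
      case (Opn a) then show ?thesis using dr IH EkS by (simp add: epc_def)
    next
      case (Cls a) then show ?thesis using dr IH EkS by (simp add: epc_def)
    qed
  qed
qed

theorem deref_out: "deref h = out h"
  using deref_aux_Ek[of 0 h] by (simp add: deref_def Ek_def)



instance sym :: (countable) countable by countable_datatype
instance rewb :: (countable) countable by countable_datatype
instance item :: (countable) countable by countable_datatype

datatype 'a gsym = GZ | GS "'a sym" | GF nat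
instance gsym :: (countable) countable by countable_datatype

datatype 'a st = Gen "'a item list" | Down nat nat "'a item list" | Read nat nat "'a item list"
  | Up nat "'a item list" | Pop nat "'a item list" | Destr nat nat "'a item list"
  | Skip nat nat "'a item list" | Push nat "'a item list"
instance st :: (countable) countable by countable_datatype

abbreviation CC :: "'a sym \<Rightarrow> 'a gsym cell" where "CC e \<equiv> SCell (GS e)"

inductive_set Tr :: "('a st, 'a, 'a gsym) atrans set" where
  t_gen_none: "gstep r None r' \<Longrightarrow> (Gen r, x, SCell z, Gen r', False, AStay) \<in> Tr"
| t_gen_ch: "gstep r (Some (Ch a)) r' \<Longrightarrow> (Gen r, Some a, SCell z, Gen r', True, AReplace [z, GS (Ch a)]) \<in> Tr"
| t_gen_opn: "gstep r (Some (Opn j)) r' \<Longrightarrow> (Gen r, x, SCell z, Gen r', False, AReplace [z, GS (Opn j)]) \<in> Tr"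
| t_gen_cls: "gstep r (Some (Cls j)) r' \<Longrightarrow> (Gen r, x, SCell z, Gen r', False, AReplace [z, GS (Cls j)]) \<in> Tr"
| t_gen_num: "gstep r (Some (Num i)) r' \<Longrightarrow> (Gen r, x, SCell z, Down i i r', False, AStay) \<in> Tr"
| t_down_found: "(Down io i r, x, CC (Opn i), Read io i r, False, ARight) \<in> Tr"
| t_down_bot: "(Down io i r, x, SBot, Up io r, False, AStay) \<in> Tr"
| t_down_left: "c \<noteq> CC (Opn i) \<Longrightarrow> c \<noteq> SBot \<Longrightarrow> c \<noteq> STop \<Longrightarrow> (Down io i r, x, c, Down io i r, False, ALeft) \<in> Tr"
| t_read_ch: "(Read io i r, Some a, CC (Ch a), Read io i r, True, ARight) \<in> Tr"
| t_read_opn: "(Read io i r, x, CC (Opn j), Read io i r, False, ARight) \<in> Tr"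
| t_read_cls: "j \<noteq> i \<Longrightarrow> (Read io i r, x, CC (Cls j), Read io i r, False, ARight) \<in> Tr"
| t_read_end: "(Read io i r, x, CC (Cls i), Up io r, False, AStay) \<in> Tr"
| t_read_num: "(Read io i r, x, CC (Num j), Down io j r, False, ACreate [GF i]) \<in> Tr"
| t_up_bot: "(Up io r, x, SBot, Up io r, False, ARight) \<in> Tr"
| t_up_z: "(Up io r, x, SCell GZ, Up io r, False, ARight) \<in> Tr"
| t_up_sym: "(Up io r, x, CC e, Up io r, False, ARight) \<in> Tr"
| t_up_cent: "(Up io r, x, SCent, Pop io r, False, ARight) \<in> Tr"
| t_up_top: "(Up io r, x, STop, Push io r, False, ALeft) \<in> Tr"
| t_pop: "(Pop io r, x, SCell (GF i), Destr io i r, False, AReplace []) \<in> Tr"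
| t_destr: "(Destr io i r, x, SCent, Skip io i r, False, ADestroy) \<in> Tr"
| t_skip: "(Skip io i r, x, CC (Num j), Read io i r, False, ARight) \<in> Tr"
| t_push: "(Push io r, x, SCell z, Gen r, False, AReplace [z, GS (Num io)]) \<in> Tr"

definition SY :: "'a rewb \<Rightarrow> 'a sym set" where "SY \<alpha> = {e. slab e \<subseteq> labs \<alpha>}"
definition GG :: "'a rewb \<Rightarrow> 'a gsym set" where "GG \<alpha> = {GZ} \<union> GS ` SY \<alpha> \<union> GF ` labs \<alpha>"

fun okq :: "'a rewb \<Rightarrow> 'a st \<Rightarrow> bool" where
  "okq \<alpha> (Gen r) = (r \<in> RR \<alpha>)"
| "okq \<alpha> (Down io i r) = (io \<in> labs \<alpha> \<and> i \<in> labs \<alpha> \<and> r \<in> RR \<alpha>)"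
| "okq \<alpha> (Read io i r) = (io \<in> labs \<alpha> \<and> i \<in> labs \<alpha> \<and> r \<in> RR \<alpha>)"
| "okq \<alpha> (Up io r) = (io \<in> labs \<alpha> \<and> r \<in> RR \<alpha>)"
| "okq \<alpha> (Pop io r) = (io \<in> labs \<alpha> \<and> r \<in> RR \<alpha>)"
| "okq \<alpha> (Destr io i r) = (io \<in> labs \<alpha> \<and> i \<in> labs \<alpha> \<and> r \<in> RR \<alpha>)"
| "okq \<alpha> (Skip io i r) = (io \<in> labs \<alpha> \<and> i \<in> labs \<alpha> \<and> r \<in> RR \<alpha>)"
| "okq \<alpha> (Push io r) = (io \<in> labs \<alpha> \<and> r \<in> RR \<alpha>)"

definition QS :: "'a rewb \<Rightarrow> 'a st set" where "QS \<alpha> = {q. okq \<alpha> q}"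

definition ActsF :: "'g set \<Rightarrow> 'g sact set" where
  "ActsF G = {AStay, ALeft, ARight, ADestroy} \<union> AReplace ` {w. set w \<subseteq> G \<and> length w \<le> 2}
      \<union> ACreate ` {w. set w \<subseteq> G \<and> length w \<le> 2}"

definition Box :: "'a rewb \<Rightarrow> ('a st, 'a, 'a gsym) atrans set" where
  "Box \<alpha> = {(q, x, c, q', adv, act). q \<in> QS \<alpha> \<and> q' \<in> QS \<alpha> \<and> c \<in> cells_of (GG \<alpha>) \<and> act \<in> ActsF (GG \<alpha>)}"

definition DD :: "'a rewb \<Rightarrow> ('a st, 'a, 'a gsym) atrans set" where "DD \<alpha> = Tr \<inter> Box \<alpha>"

lemma finite_SY: "finite (SY (\<alpha> :: ('a::finite) rewb))"
proof -
  have "SY \<alpha> \<subseteq> range Ch \<union> Opn ` labs \<alpha> \<union> Cls ` labs \<alpha> \<union> Num ` labs \<alpha>"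
    unfolding SY_def by (auto, case_tac x, auto)
  moreover have "finite (range (Ch :: 'a \<Rightarrow> 'a sym))" by simp
  ultimately show ?thesis using finite_labs[of \<alpha>] by (meson finite_Un finite_imageI finite_subset)
qed

lemma finite_GG: "finite (GG (\<alpha> :: ('a::finite) rewb))"
  unfolding GG_def using finite_SY finite_labs by auto

lemma finite_QS: "finite (QS \<alpha>)"
proof -
  let ?L = "labs \<alpha>" and ?R = "RR \<alpha>"
  have "QS \<alpha> \<subseteq> Gen ` ?R \<union> (\<lambda>(io,i,r). Down io i r) ` (?L \<times> ?L \<times> ?R) \<union> (\<lambda>(io,i,r). Read io i r) ` (?L \<times> ?L \<times> ?R)
     \<union> (\<lambda>(io,r). Up io r) ` (?L \<times> ?R) \<union> (\<lambda>(io,r). Pop io r) ` (?L \<times> ?R) \<union> (\<lambda>(io,i,r). Destr io i r) ` (?L \<times> ?L \<times> ?R)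
     \<union> (\<lambda>(io,i,r). Skip io i r) ` (?L \<times> ?L \<times> ?R) \<union> (\<lambda>(io,r). Push io r) ` (?L \<times> ?R)" (is "_ \<subseteq> ?S")
  proof
    fix q assume "q \<in> QS \<alpha>" then show "q \<in> ?S" by (cases q) (auto simp: QS_def image_iff)
  qed
  then show ?thesis using finite_labs[of \<alpha>] finite_RR[of \<alpha>] by (auto intro: finite_subset)
qed

lemma finite_ActsF: "finite G \<Longrightarrow> finite (ActsF G)"
  unfolding ActsF_def using finite_lists_length_le[of G 2] by auto

lemma finite_DD: "finite (DD (\<alpha> :: ('a::finite) rewb))"
proof -
  have "DD \<alpha> \<subseteq> QS \<alpha> \<times> UNIV \<times> cells_of (GG \<alpha>) \<times> QS \<alpha> \<times> UNIV \<times> ActsF (GG \<alpha>)"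
    unfolding DD_def Box_def by auto
  moreover have "finite (QS \<alpha> \<times> (UNIV :: 'a option set) \<times> cells_of (GG \<alpha>) \<times> QS \<alpha> \<times> (UNIV :: bool set) \<times> ActsF (GG \<alpha>))"
    by (intro finite_cartesian_product finite_QS finite_GG finite_ActsF finite_UNIV) (auto simp: finite_GG)
  ultimately show ?thesis by (rule finite_subset)
qed

definition AUT :: "('a::finite) rewb \<Rightarrow> 'a nsa" where
  "AUT \<alpha> = mkA (QS \<alpha>) (GG \<alpha>) (DD \<alpha>) (Gen [It \<alpha>]) GZ {Gen []}"

lemma is_nsa_AUT: "is_nsa (AUT \<alpha>)"
  unfolding AUT_def
proof (rule is_nsa_mkA)
  show "finite (QS \<alpha>)" "finite (GG \<alpha>)" "finite (DD \<alpha>)" by (rule finite_QS finite_GG finite_DD)+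
  show "Gen [It \<alpha>] \<in> QS \<alpha>" "GZ \<in> GG \<alpha>" "{Gen []} \<subseteq> QS \<alpha>"
    by (auto simp: QS_def GG_def RR_top RR_nil)
  fix q x c q' adv act assume "(q, x, c, q', adv, act) \<in> DD \<alpha>"
  then have "q \<in> QS \<alpha>" "q' \<in> QS \<alpha>" "c \<in> cells_of (GG \<alpha>)" "act \<in> ActsF (GG \<alpha>)"
    unfolding DD_def Box_def by auto
  then show "q \<in> QS \<alpha> \<and> q' \<in> QS \<alpha> \<and> cell_syms c \<subseteq> GG \<alpha> \<and> sact_syms act \<subseteq> GG \<alpha>"
    by (auto simp: ActsF_def)
qed

lemma lang_AUT: "nsa_lang (AUT \<alpha>) = alang (DD \<alpha>) (Gen [It \<alpha>]) GZ {Gen []}"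
  unfolding AUT_def by (rule lang_enc)



type_synonym frames = "(nat \<times> nat \<times> bool) list"

fun bld :: "'a sym list \<Rightarrow> nat \<Rightarrow> frames \<Rightarrow> 'a gsym cell list" where
  "bld h st [] = map CC (drop st h) @ [STop]"
| "bld h st ((i, m, b) # fr) = map CC (take (m - st) (drop st h)) @ [SCent] @ (if b then [SCell (GF i)] else [])
      @ [STop] @ bld h m fr"

definition stk :: "'a sym list \<Rightarrow> frames \<Rightarrow> 'a gsym cell list" where
  "stk h fr = SBot # SCell GZ # bld h 0 fr"

fun bnd :: "'a sym list \<Rightarrow> frames \<Rightarrow> nat" where
  "bnd h [] = length h" | "bnd h ((i, m, b) # fr) = m"

fun cont :: "'a sym list \<Rightarrow> frames \<Rightarrow> 'a list option" where
  "cont h [] = Some []"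
| "cont h ((i, m, b) # fr) = oapp (rd h i (Suc m) (bnd h fr)) (cont h fr)"

fun wff :: "'a sym list \<Rightarrow> frames \<Rightarrow> bool" where
  "wff h [] = True"
| "wff h ((i, m, b) # fr) = (m < bnd h fr \<and> (\<exists>j. h ! m = Num j) \<and> (\<forall>(i', m', b') \<in> set fr. b') \<and> wff h fr)"

definition alive :: "frames \<Rightarrow> bool" where "alive fr = (\<forall>(i, m, b) \<in> set fr. b)"

lemma bnd_le: "wff h fr \<Longrightarrow> bnd h fr \<le> length h"
  by (induct fr rule: wff.induct) auto

lemma top_idx_app: "STop \<notin> set xs \<Longrightarrow> top_idx (xs @ STop # ys) = length xs"
  unfolding top_idx_def by (induct xs) auto

lemma bld_split:
  "st \<le> m \<Longrightarrow> m \<le> bnd h fr \<Longrightarrow> m \<le> length h \<Longrightarrow> bld h st fr = map CC (take (m - st) (drop st h)) @ bld h m fr"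
proof (cases fr)
  case Nil
  assume a: "st \<le> m" "m \<le> bnd h fr" "m \<le> length h"
  have "drop st h = take (m - st) (drop st h) @ drop m h"
    using a by (metis append_take_drop_id drop_drop le_add_diff_inverse2)
  then show ?thesis using Nil by (metis bld.simps(1) map_append append.assoc)
next
  case (Cons f fr')
  obtain i m1 b where f: "f = (i, m1, b)" by (cases f)
  assume a: "st \<le> m" "m \<le> bnd h fr" "m \<le> length h"
  then have mm: "m \<le> m1" using Cons f by simp
  have "take (m1 - st) (drop st h) = take (m - st) (drop st h) @ take (m1 - m) (drop m h)"
  proof -
    have e: "m1 - st = (m - st) + (m1 - m)" using a mm by simp
    have d: "drop (m - st) (drop st h) = drop m h" using a(1) by simp
    show ?thesis unfolding e take_add d ..
  qed
  then show ?thesis using Cons f by simp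
qed

lemma stk_nil: "stk h [] = SBot # SCell GZ # map CC h @ [STop]"
  by (simp add: stk_def)

lemma stk_cons: "stk h ((i, m, b) # fr) = SBot # SCell GZ # map CC (take m h) @ [SCent] @ (if b then [SCell (GF i)] else []) @ [STop] @ bld h m fr"
  by (simp add: stk_def)

lemma top_stk_nil: "top_idx (stk h []) = length h + 2"
  using top_idx_app[of "SBot # SCell GZ # map CC h" "[]"] by (auto simp: stk_nil)

lemma top_stk_cons: "m \<le> length h \<Longrightarrow> top_idx (stk h ((i, m, b) # fr)) = m + (if b then 4 else 3)"
proof -
  assume "m \<le> length h"
  have "stk h ((i, m, b) # fr) = (SBot # SCell GZ # map CC (take m h) @ [SCent] @ (if b then [SCell (GF i)] else [])) @ STop # bld h m fr"
    by (simp add: stk_cons)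
  moreover have "STop \<notin> set (SBot # SCell GZ # map CC (take m h) @ [SCent] @ (if b then [SCell (GF i)] else []))"
    by auto
  ultimately have "top_idx (stk h ((i, m, b) # fr)) = length (SBot # SCell GZ # map CC (take m h) @ [SCent] @ (if b then [SCell (GF i)] else []))"
    using top_idx_app by metis
  then show ?thesis using \<open>m \<le> length h\<close> by (simp add: min_def)
qed

lemma top_stk: "wff h fr \<Longrightarrow> top_idx (stk h fr) = bnd h fr + (case fr of [] \<Rightarrow> 2 | (i, m, b) # _ \<Rightarrow> if b then 4 else 3)"
proof (cases fr)
  case Nil then show ?thesis by (simp add: top_stk_nil)
next
  case (Cons f fr')
  assume w: "wff h fr"
  obtain i m b where f: "f = (i, m, b)" by (cases f)
  have "m \<le> length h" using w Cons f bnd_le[of h fr'] by auto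
  then show ?thesis using Cons f top_stk_cons[OF \<open>m \<le> length h\<close>] by (cases b) simp_all
qed

definition vcell :: "'a sym list \<Rightarrow> frames \<Rightarrow> nat \<Rightarrow> 'a gsym cell" where
  "vcell h fr p = (if p = 0 then SBot else if p = 1 then SCell GZ else if p < bnd h fr + 2 then CC (h ! (p - 2))
     else if p = bnd h fr + 2 then (if fr = [] then STop else SCent)
     else (case fr of [] \<Rightarrow> STop | (i, m, b) # _ \<Rightarrow> if b \<and> p = m + 3 then SCell (GF i) else STop))"

lemma stk_nth: "wff h fr \<Longrightarrow> p \<le> top_idx (stk h fr) \<Longrightarrow> stk h fr ! p = vcell h fr p"
proof (cases fr)
  case Nil
  assume "p \<le> top_idx (stk h fr)"
  then have "p \<le> length h + 2" using Nil by (simp add: top_stk_nil)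
  then show ?thesis using Nil
    by (auto simp: stk_nil vcell_def nth_append nth_Cons' not_less numeral_2_eq_2)
next
  case (Cons f fr')
  obtain i m b where f: "f = (i, m, b)" by (cases f)
  assume w: "wff h fr" and p: "p \<le> top_idx (stk h fr)"
  have ml: "m \<le> length h" using w Cons f bnd_le[of h fr'] by auto
  have p2: "p \<le> m + (if b then 4 else 3)" using p top_stk_cons[OF ml] Cons f by simp
  have lt: "length (take m h) = m" using ml by simp
  show ?thesis using Cons f p2 ml lt
    by (auto simp: stk_cons vcell_def nth_append nth_Cons' not_less numeral_2_eq_2)
qed

lemma vcell_simps:
  "vcell h fr 0 = SBot"
  "vcell h fr (Suc 0) = SCell GZ"
  "2 \<le> p \<Longrightarrow> p < bnd h fr + 2 \<Longrightarrow> vcell h fr p = CC (h ! (p - 2))"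
  "vcell h [] (length h + 2) = STop"
  "vcell h ((i, m, b) # fr) (m + 2) = SCent"
  "vcell h ((i, m, True) # fr) (m + 3) = SCell (GF i)"
  by (auto simp: vcell_def)

lemma vcell_cases:
  assumes "wff h fr" "p \<le> top_idx (stk h fr)"
  shows "vcell h fr p = SBot \<longleftrightarrow> p = 0"
    and "vcell h fr p = SCell GZ \<longleftrightarrow> p = 1"
    and "vcell h fr p = CC e \<longleftrightarrow> 2 \<le> p \<and> p < bnd h fr + 2 \<and> h ! (p - 2) = e"
    and "vcell h fr p = SCent \<longleftrightarrow> (\<exists>i m b fr'. fr = (i, m, b) # fr' \<and> p = m + 2)"
    and "vcell h fr p = SCell (GF i) \<longleftrightarrow> (\<exists>m fr'. fr = (i, m, True) # fr' \<and> p = m + 3)"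
    and "vcell h fr p = STop \<longleftrightarrow> p = top_idx (stk h fr)"
  using assms top_stk[OF assms(1)]
  by (auto simp: vcell_def split: list.splits if_splits)

definition topsym :: "'a sym list \<Rightarrow> 'a gsym" where
  "topsym h = (if h = [] then GZ else GS (last h))"

lemma stk_nil_top: "stk h [] ! Suc (length h) = SCell (topsym h)"
  by (cases h rule: rev_cases) (auto simp: stk_nil topsym_def nth_append)

lemma sm_push: "stack_move (stk h [], Suc (length h)) (AReplace [topsym h, GS e]) (stk (h @ [e]) [], Suc (length (h @ [e])))"
proof -
  have t: "top_idx (stk h []) = length h + 2" by (rule top_stk_nil)
  have "take (Suc (length h)) (stk h []) @ map SCell [topsym h, GS e] @ drop (length h + 2) (stk h []) = stk (h @ [e]) []"
    by (cases h rule: rev_cases) (auto simp: stk_nil topsym_def)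
  then show ?thesis using t stk_nil_top[of h] by auto
qed

lemma sm_create:
  assumes "wff h fr" "m < bnd h fr"
  shows "stack_move (stk h fr, m + 2) (ACreate [GF i]) (stk h ((i, m, True) # fr), m + 3)"
proof -
  have bl: "bnd h fr \<le> length h" using bnd_le[OF assms(1)] .
  have sp: "bld h 0 fr = map CC (take m h) @ bld h m fr"
    using bld_split[of 0 m h fr] assms bl by simp
  have t: "m + 2 < top_idx (stk h fr)" using top_stk[OF assms(1)] assms(2) by (auto split: list.splits)
  have lt: "length (take m h) = m" using assms bl by simp
  show ?thesis using t lt by (simp add: stk_def sp)
qed

lemma stk_cons': "stk h ((i, m, b) # fr) = (SBot # SCell GZ # map CC (take m h)) @ [SCent] @ (if b then [SCell (GF i)] else []) @ [STop] @ bld h m fr"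
  by (simp add: stk_def)

lemma tkdr: "length xs = n \<Longrightarrow> take (n + k) (xs @ ys) = xs @ take k ys"
  "length xs = n \<Longrightarrow> drop (n + k) (xs @ ys) = drop k ys"
  "length xs = n \<Longrightarrow> (xs @ ys) ! (n + k) = ys ! k"
  by auto

lemma sm_pop:
  assumes "m \<le> length h"
  shows "stack_move (stk h ((i, m, True) # fr), m + 3) (AReplace []) (stk h ((i, m, False) # fr), m + 2)"
proof -
  have t: "top_idx (stk h ((i, m, True) # fr)) = m + 4" using top_stk_cons[OF assms] by simp
  have lt: "length (SBot # SCell GZ # map CC (take m h)) = m + 2" using assms by simp
  have e1: "take (m + 2 + 1) (stk h ((i, m, True) # fr)) = (SBot # SCell GZ # map CC (take m h)) @ [SCent]"
    unfolding stk_cons' tkdr(1)[OF lt] by simp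
  have e2: "drop (m + 2 + 2) (stk h ((i, m, True) # fr)) = STop # bld h m fr"
    unfolding stk_cons' tkdr(2)[OF lt] by simp
  have e3: "stk h ((i, m, True) # fr) ! (m + 2 + 1) = SCell (GF i)"
    unfolding stk_cons' tkdr(3)[OF lt] by simp
  have "(SBot # SCell GZ # map CC (take m h)) @ [SCent] @ [] @ [STop] @ bld h m fr = stk h ((i, m, False) # fr)"
    by (simp add: stk_cons')
  then show ?thesis using t e1 e2 e3 by (simp add: numeral_eq_Suc)
qed

lemma sm_destroy:
  assumes "wff h ((i, m, b) # fr)"
  shows "stack_move (stk h ((i, m, False) # fr), m + 2) ADestroy (stk h fr, m + 2)"
proof -
  have bl: "bnd h fr \<le> length h" using bnd_le assms by auto
  have mb: "m < bnd h fr" using assms by simp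
  have t: "top_idx (stk h ((i, m, False) # fr)) = m + 3" using top_stk_cons[of m h i False fr] mb bl by simp
  have ml: "m \<le> length h" using mb bl by linarith
  have lt: "length (SBot # SCell GZ # map CC (take m h)) = m + 2" using ml by simp
  have sp: "bld h 0 fr = map CC (take m h) @ bld h m fr"
    using bld_split[of 0 m h fr] mb bl by simp
  have ne: "bld h m fr \<noteq> []" by (cases fr) auto
  have e1: "take (m + 2 + 0) (stk h ((i, m, False) # fr)) = (SBot # SCell GZ # map CC (take m h))"
    unfolding stk_cons' tkdr(1)[OF lt] by simp
  have e2: "drop (m + 2 + 2) (stk h ((i, m, False) # fr)) = bld h m fr"
    unfolding stk_cons' tkdr(2)[OF lt] by simp
  have e3: "stk h ((i, m, False) # fr) ! (m + 2 + 0) = SCent"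
    unfolding stk_cons' tkdr(3)[OF lt] by simp
  have e4: "m + 3 < length (stk h ((i, m, False) # fr))" using lt ne unfolding stk_cons' by simp
  have e5: "stk h fr = (SBot # SCell GZ # map CC (take m h)) @ bld h m fr" by (simp add: stk_def sp)
  show ?thesis using t e1 e2 e3 e4 e5 by (simp add: numeral_eq_Suc)
qed

lemma stack_move_det: "stack_move (s, n) a (s1, n1) \<Longrightarrow> stack_move (s, n) a (s2, n2) \<Longrightarrow> s1 = s2 \<and> n1 = n2"
  by (cases a) auto

lemma sm_move: "stack_move (s, n) ALeft (s', n') \<longleftrightarrow> 0 < n \<and> n \<le> top_idx s \<and> s' = s \<and> n' = n - 1"
  "stack_move (s, n) ARight (s', n') \<longleftrightarrow> n < top_idx s \<and> s' = s \<and> n' = n + 1"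
  "stack_move (s, n) AStay (s', n') \<longleftrightarrow> n \<le> top_idx s \<and> s' = s \<and> n' = n"
  by auto



fun qio :: "'a st \<Rightarrow> nat" where
  "qio (Gen r) = 0" | "qio (Down io i r) = io" | "qio (Read io i r) = io" | "qio (Up io r) = io"
| "qio (Pop io r) = io" | "qio (Destr io i r) = io" | "qio (Skip io i r) = io" | "qio (Push io r) = io"

fun qr :: "'a st \<Rightarrow> 'a item list" where
  "qr (Gen r) = r" | "qr (Down io i r) = r" | "qr (Read io i r) = r" | "qr (Up io r) = r"
| "qr (Pop io r) = r" | "qr (Destr io i r) = r" | "qr (Skip io i r) = r" | "qr (Push io r) = r"

fun remq :: "'a sym list \<Rightarrow> frames \<Rightarrow> 'a st \<Rightarrow> nat \<Rightarrow> 'a list option" where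
  "remq h fr (Down io j r) p = oapp (case lo j (take (min (p - 1) (bnd h fr)) h) of None \<Rightarrow> Some [] | Some q \<Rightarrow> rd h j (Suc q) (bnd h fr)) (cont h fr)"
| "remq h fr (Read io i r) p = oapp (rd h i (p - 2) (bnd h fr)) (cont h fr)"
| "remq h fr (Skip io i r) p = oapp (rd h i (p - 1) (bnd h fr)) (cont h fr)"
| "remq h fr (Up io r) p = cont h fr"
| "remq h fr (Pop io r) p = cont h fr"
| "remq h fr (Destr io i r) p = cont h fr"
| "remq h fr (Push io r) p = Some []"
| "remq h fr (Gen r) p = Some []"

fun mcond :: "'a sym list \<Rightarrow> frames \<Rightarrow> 'a st \<Rightarrow> nat \<Rightarrow> 'a list \<Rightarrow> bool" where
  "mcond h fr (Down io j r) p C = alive fr"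
| "mcond h fr (Read io i r) p C = (alive fr \<and> 2 \<le> p)"
| "mcond h fr (Skip io i r) p C = (alive fr \<and> 2 \<le> p)"
| "mcond h fr (Up io r) p C = (alive fr \<and> p \<le> bnd h fr + 2)"
| "mcond h fr (Pop io r) p C = alive fr"
| "mcond h fr (Destr io i r) p C = (\<exists>m fr'. fr = (i, m, False) # fr' \<and> p = m + 2)"
| "mcond h fr (Push io r) p C = (fr = [] \<and> p = Suc (length h) \<and> vl h io (length h) = Some C)"
| "mcond h fr (Gen r) p C = True"

definition dinv :: "'a rewb \<Rightarrow> 'a list \<Rightarrow> 'a st \<Rightarrow> 'a list \<Rightarrow> 'a gsym cell list \<Rightarrow> nat \<Rightarrow> bool" where
  "dinv \<alpha> w0 q w s p = (\<exists>h rp X C fr. gsteps [It \<alpha>] h rp \<and> gstep rp (Some (Num (qio q))) (qr q) \<and> out h = Some X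
      \<and> w0 = X @ C @ w \<and> s = stk h fr \<and> wff h fr \<and> p \<le> top_idx s \<and> mcond h fr q p C
      \<and> (\<forall>R. remq h fr q p = Some R \<longrightarrow> vl h (qio q) (length h) = Some (C @ R)))"

definition ginv :: "'a rewb \<Rightarrow> 'a list \<Rightarrow> 'a item list \<Rightarrow> 'a list \<Rightarrow> 'a gsym cell list \<Rightarrow> nat \<Rightarrow> bool" where
  "ginv \<alpha> w0 r w s p = (\<exists>h X. gsteps [It \<alpha>] h r \<and> out h = Some X \<and> w0 = X @ w \<and> s = stk h [] \<and> p = Suc (length h))"

definition Inv :: "'a rewb \<Rightarrow> 'a list \<Rightarrow> ('a st \<times> 'a list \<times> 'a gsym cell list \<times> nat) \<Rightarrow> bool" where
  "Inv \<alpha> w0 c = (case c of (q, w, s, p) \<Rightarrow> (case q of Gen r \<Rightarrow> ginv \<alpha> w0 r w s p | _ \<Rightarrow> dinv \<alpha> w0 q w s p))"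

lemma Inv_simps:
  "Inv \<alpha> w0 (Gen r, w, s, p) = ginv \<alpha> w0 r w s p"
  "Inv \<alpha> w0 (Down io i r, w, s, p) = dinv \<alpha> w0 (Down io i r) w s p"
  "Inv \<alpha> w0 (Read io i r, w, s, p) = dinv \<alpha> w0 (Read io i r) w s p"
  "Inv \<alpha> w0 (Up io r, w, s, p) = dinv \<alpha> w0 (Up io r) w s p"
  "Inv \<alpha> w0 (Pop io r, w, s, p) = dinv \<alpha> w0 (Pop io r) w s p"
  "Inv \<alpha> w0 (Destr io i r, w, s, p) = dinv \<alpha> w0 (Destr io i r) w s p"
  "Inv \<alpha> w0 (Skip io i r, w, s, p) = dinv \<alpha> w0 (Skip io i r) w s p"
  "Inv \<alpha> w0 (Push io r, w, s, p) = dinv \<alpha> w0 (Push io r) w s p"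
  by (simp_all add: Inv_def)

lemma wff_head_b: "wff h ((i, m, b) # fr) \<Longrightarrow> wff h ((i, m, b') # fr)" by simp

lemma alive_tail: "wff h ((i, m, b) # fr) \<Longrightarrow> alive fr"
  by (auto simp: alive_def)

lemma gen_push:
  assumes g: "ginv \<alpha> w0 r w s p" and st: "gstep r (Some e) r'" and cell: "s ! p = SCell z"
    and sm: "stack_move (s, p) (AReplace [z, GS e]) (s', p')"
    and pc: "pc (h0 @ [e]) (length h0) = Some Y" and hh: "\<And>h. pc (h @ [e]) (length h) = pc (h0 @ [e]) (length h0)"
    and w: "w = Y @ w'"
  shows "ginv \<alpha> w0 r' w' s' p'"
proof -
  from g obtain h X where h: "gsteps [It \<alpha>] h r" "out h = Some X" "w0 = X @ w" "s = stk h []" "p = Suc (length h)"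
    by (auto simp: ginv_def)
  have z: "z = topsym h" using cell stk_nil_top[of h] h by simp
  have s': "s' = stk (h @ [e]) [] \<and> p' = Suc (length (h @ [e]))"
    using stack_move_det[OF sm] sm_push[of h e] z h by auto
  have g2: "gsteps [It \<alpha>] (h @ [e]) r'" using gsteps_snoc[OF h(1) st] by (simp add: opt_def)
  have "out (h @ [e]) = Some (X @ Y)" using out_snoc[of h e] h(2) pc hh[of h] by simp
  then show ?thesis unfolding ginv_def using g2 s' h w by auto
qed

lemma suc2: "2 \<le> (p::nat) \<Longrightarrow> Suc (p - Suc (Suc 0)) = p - Suc 0" by arith

lemma cellD:
  assumes "wff h fr" "p \<le> top_idx (stk h fr)"
  shows "stk h fr ! p = vcell h fr p"
  using stk_nth assms by blast

lemma inv_step: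
  assumes inv: "Inv \<alpha> w0 (q, w, s, p)" and tr: "(q, x, s ! p, q', adv, act) \<in> Tr"
    and x: "x = (case w of [] \<Rightarrow> None | a # _ \<Rightarrow> Some a)" and adv: "adv \<longrightarrow> w \<noteq> []"
    and w': "w' = (if adv then tl w else w)"
    and sm: "stack_move (s, p) act (s', p')"
  shows "Inv \<alpha> w0 (q', w', s', p')"
  using tr
proof (cases rule: Tr.cases)
  case (t_gen_none r r' z)
  then have e: "q = Gen r" "q' = Gen r'" "adv = False" "act = AStay" "s' = s" "p' = p" using sm by auto
  from inv e obtain h X where h: "gsteps [It \<alpha>] h r" "out h = Some X" "w0 = X @ w" "s = stk h []" "p = Suc (length h)"
    by (auto simp: Inv_simps ginv_def)
  have "gsteps [It \<alpha>] h r'" using gsteps_snoc[OF h(1) \<open>gstep r None r'\<close>] by (simp add: opt_def)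
  then show ?thesis using e h w' by (auto simp: Inv_simps ginv_def)
next
  case (t_gen_ch r a r' z)
  then have e: "q = Gen r" "q' = Gen r'" "adv = True" "act = AReplace [z, GS (Ch a)]" "s ! p = SCell z" "x = Some a" by auto
  then obtain w1 where w1: "w = a # w1" "w' = w1" using x adv w' by (cases w) auto
  show ?thesis using gen_push[of \<alpha> w0 r w s p "Ch a" r' z s' p' "[]" "[a]" w1] inv e \<open>gstep r (Some (Ch a)) r'\<close> sm w1
    by (auto simp: Inv_simps pc_snoc pc_def)
next
  case (t_gen_opn r j r' z)
  then have e: "q = Gen r" "q' = Gen r'" "adv = False" "act = AReplace [z, GS (Opn j)]" "s ! p = SCell z" by auto
  show ?thesis using gen_push[of \<alpha> w0 r w s p "Opn j" r' z s' p' "[]" "[]" w] inv e \<open>gstep r (Some (Opn j)) r'\<close> sm w'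
    by (auto simp: Inv_simps pc_snoc pc_def)
next
  case (t_gen_cls r j r' z)
  then have e: "q = Gen r" "q' = Gen r'" "adv = False" "act = AReplace [z, GS (Cls j)]" "s ! p = SCell z" by auto
  show ?thesis using gen_push[of \<alpha> w0 r w s p "Cls j" r' z s' p' "[]" "[]" w] inv e \<open>gstep r (Some (Cls j)) r'\<close> sm w'
    by (auto simp: Inv_simps pc_snoc pc_def)
next
  case (t_gen_num r i r' z)
  then have e: "q = Gen r" "q' = Down i i r'" "adv = False" "act = AStay" "s' = s" "p' = p" using sm by auto
  from inv e obtain h X where h: "gsteps [It \<alpha>] h r" "out h = Some X" "w0 = X @ w" "s = stk h []" "p = Suc (length h)"
    by (auto simp: Inv_simps ginv_def)
  have "remq h [] (Down i i r') p = vl h i (length h)" using h(5) by (simp add: vl_def split: option.split)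
  then show ?thesis using e h w' \<open>gstep r (Some (Num i)) r'\<close> top_stk_nil[of h] unfolding e(2) e(5) e(6) Inv_simps dinv_def
    by (intro exI[of _ h] exI[of _ r] exI[of _ X] exI[of _ "[]"] exI[of _ "[]"]) (auto simp: alive_def)
next
  case (t_down_found io i r)
  then have e: "q = Down io i r" "q' = Read io i r" "adv = False" "act = ARight" "s ! p = CC (Opn i)" by auto
  from inv e obtain h rp X C fr where d: "gsteps [It \<alpha>] h rp" "gstep rp (Some (Num io)) r" "out h = Some X"
      "w0 = X @ C @ w" "s = stk h fr" "wff h fr" "p \<le> top_idx s" "alive fr"
      "\<forall>R. remq h fr (Down io i r) p = Some R \<longrightarrow> vl h io (length h) = Some (C @ R)"
    by (auto simp: Inv_simps dinv_def)
  have "vcell h fr p = CC (Opn i)" using cellD[OF d(6)] d e by simp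
  then have c: "2 \<le> p" "p < bnd h fr + 2" "h ! (p - 2) = Opn i" using vcell_cases(3)[OF d(6)] d by auto
  have bl: "bnd h fr \<le> length h" by (rule bnd_le[OF d(6)])
  have s': "s' = s" "p' = Suc p" using sm e by auto
  have "min (p - 1) (bnd h fr) = Suc (p - 2)" using c by auto
  then have lo: "lo i (take (min (p - 1) (bnd h fr)) h) = Some (p - 2)"
    using lo_take_Suc[of "p - 2" h i] c bl by auto
  have rq: "remq h fr (Read io i r) (Suc p) = remq h fr (Down io i r) p"
    using lo c by (simp add: Suc_diff_le numeral_2_eq_2 suc2)
  have tp: "Suc p \<le> top_idx s" using top_stk[OF d(6)] c d(5) by (auto split: list.splits)
  show ?thesis using d s' e w' rq tp c unfolding e(2) Inv_simps dinv_def
    by (intro exI[of _ h] exI[of _ rp] exI[of _ X] exI[of _ C] exI[of _ fr]) auto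
next
  case (t_down_bot io i r)
  then have e: "q = Down io i r" "q' = Up io r" "adv = False" "act = AStay" "s ! p = SBot" by auto
  from inv e obtain h rp X C fr where d: "gsteps [It \<alpha>] h rp" "gstep rp (Some (Num io)) r" "out h = Some X"
      "w0 = X @ C @ w" "s = stk h fr" "wff h fr" "p \<le> top_idx s" "alive fr"
      "\<forall>R. remq h fr (Down io i r) p = Some R \<longrightarrow> vl h io (length h) = Some (C @ R)"
    by (auto simp: Inv_simps dinv_def)
  have "vcell h fr p = SBot" using cellD[OF d(6)] d e by simp
  then have p0: "p = 0" using vcell_cases(1)[OF d(6)] d by auto
  have s': "s' = s" "p' = p" using sm e by auto
  have rq: "remq h fr (Up io r) p = remq h fr (Down io i r) p" using p0 by simp
  show ?thesis using d s' e w' rq p0 unfolding e(2) Inv_simps dinv_def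
    by (intro exI[of _ h] exI[of _ rp] exI[of _ X] exI[of _ C] exI[of _ fr]) auto
next
  case (t_down_left i io r)
  define c where "c = s ! p"
  have cc: "c \<noteq> CC (Opn i)" "c \<noteq> SBot" "c \<noteq> STop" using t_down_left c_def by auto
  from t_down_left have e: "q = Down io i r" "q' = Down io i r" "adv = False" "act = ALeft" "s ! p = c" by (auto simp: c_def)
  from inv e obtain h rp X C fr where d: "gsteps [It \<alpha>] h rp" "gstep rp (Some (Num io)) r" "out h = Some X"
      "w0 = X @ C @ w" "s = stk h fr" "wff h fr" "p \<le> top_idx s" "alive fr"
      "\<forall>R. remq h fr (Down io i r) p = Some R \<longrightarrow> vl h io (length h) = Some (C @ R)"
    by (auto simp: Inv_simps dinv_def)
  have vc: "vcell h fr p = c" using cellD[OF d(6)] d e by simp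
  have p0: "p \<noteq> 0" using vc cc vcell_cases(1)[OF d(6)] d by auto
  have s': "s' = s" "p' = p - 1" using sm e by auto
  have bl: "bnd h fr \<le> length h" by (rule bnd_le[OF d(6)])
  have lo: "lo i (take (min (p - 1) (bnd h fr)) h) = lo i (take (min (p - 1 - 1) (bnd h fr)) h)"
  proof (cases "p = 1")
    case True then show ?thesis by simp
  next
    case False
    show ?thesis
    proof (cases "p < bnd h fr + 2")
      case True
      then have "vcell h fr p = CC (h ! (p - 2))" using False p0 by (simp add: vcell_def)
      then have "h ! (p - 2) \<noteq> Opn i" using vc cc by auto
      moreover have "min (p - 1) (bnd h fr) = Suc (p - 2)" "min (p - 1 - 1) (bnd h fr) = p - 2"
        using True False p0 by auto
      ultimately show ?thesis using lo_take_Suc[of "p - 2" h i] True False p0 bl by auto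
    next
      case False
      then have "min (p - 1) (bnd h fr) = bnd h fr" "min (p - 1 - 1) (bnd h fr) = bnd h fr" by auto
      then show ?thesis by simp
    qed
  qed
  have rq: "remq h fr (Down io i r) (p - 1) = remq h fr (Down io i r) p" using lo by simp
  show ?thesis using d s' e w' rq unfolding e(2) Inv_simps dinv_def
    by (intro exI[of _ h] exI[of _ rp] exI[of _ X] exI[of _ C] exI[of _ fr]) auto
next
  case (t_read_ch io i r a)
  then have e: "q = Read io i r" "q' = Read io i r" "adv = True" "act = ARight" "s ! p = CC (Ch a)" "x = Some a" by auto
  then obtain w1 where w1: "w = a # w1" "w' = w1" using x adv w' by (cases w) auto
  from inv e obtain h rp X C fr where d: "gsteps [It \<alpha>] h rp" "gstep rp (Some (Num io)) r" "out h = Some X"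
      "w0 = X @ C @ w" "s = stk h fr" "wff h fr" "p \<le> top_idx s" "alive fr" "2 \<le> p"
      "\<forall>R. remq h fr (Read io i r) p = Some R \<longrightarrow> vl h io (length h) = Some (C @ R)"
    by (auto simp: Inv_simps dinv_def)
  have "vcell h fr p = CC (Ch a)" using cellD[OF d(6)] d e by simp
  then have c: "2 \<le> p" "p < bnd h fr + 2" "h ! (p - 2) = Ch a" using vcell_cases(3)[OF d(6)] d by auto
  have bl: "bnd h fr \<le> length h" by (rule bnd_le[OF d(6)])
  have s': "s' = s" "p' = Suc p" using sm e by auto
  have ru: "rd h i (p - 2) (bnd h fr) = map_option ((#) a) (rd h i (Suc (p - 2)) (bnd h fr))"
    using rd_unfold[of "p - 2" "bnd h fr" h i] c bl by simp
  have key: "\<forall>R. remq h fr (Read io i r) (Suc p) = Some R \<longrightarrow> vl h io (length h) = Some ((C @ [a]) @ R)"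
  proof (intro allI impI)
    fix R assume "remq h fr (Read io i r) (Suc p) = Some R"
    then obtain R1 R2 where "rd h i (p - 1) (bnd h fr) = Some R1" "cont h fr = Some R2" "R = R1 @ R2"
      by (auto simp: oapp_Some_iff)
    then have "remq h fr (Read io i r) p = Some (a # R)" using ru c by (simp add: Suc_diff_le numeral_2_eq_2 suc2)
    then show "vl h io (length h) = Some ((C @ [a]) @ R)" using d(10) by simp
  qed
  have tp: "Suc p \<le> top_idx s" using top_stk[OF d(6)] c d(5) by (auto split: list.splits)
  show ?thesis using d s' e w1 key tp unfolding e(2) Inv_simps dinv_def
    by (intro exI[of _ h] exI[of _ rp] exI[of _ X] exI[of _ "C @ [a]"] exI[of _ fr]) auto
next
  case (t_read_opn io i r j)
  then have e: "q = Read io i r" "q' = Read io i r" "adv = False" "act = ARight" "s ! p = CC (Opn j)" by auto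
  from inv e obtain h rp X C fr where d: "gsteps [It \<alpha>] h rp" "gstep rp (Some (Num io)) r" "out h = Some X"
      "w0 = X @ C @ w" "s = stk h fr" "wff h fr" "p \<le> top_idx s" "alive fr" "2 \<le> p"
      "\<forall>R. remq h fr (Read io i r) p = Some R \<longrightarrow> vl h io (length h) = Some (C @ R)"
    by (auto simp: Inv_simps dinv_def)
  have "vcell h fr p = CC (Opn j)" using cellD[OF d(6)] d e by simp
  then have c: "2 \<le> p" "p < bnd h fr + 2" "h ! (p - 2) = Opn j" using vcell_cases(3)[OF d(6)] d by auto
  have bl: "bnd h fr \<le> length h" by (rule bnd_le[OF d(6)])
  have s': "s' = s" "p' = Suc p" using sm e by auto
  have rq: "remq h fr (Read io i r) (Suc p) = remq h fr (Read io i r) p"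
    using rd_unfold[of "p - 2" "bnd h fr" h i] c bl by (simp add: Suc_diff_le numeral_2_eq_2 suc2)
  have tp: "Suc p \<le> top_idx s" using top_stk[OF d(6)] c d(5) by (auto split: list.splits)
  show ?thesis using d s' e w' rq tp unfolding e(2) Inv_simps dinv_def
    by (intro exI[of _ h] exI[of _ rp] exI[of _ X] exI[of _ C] exI[of _ fr]) auto
next
  case (t_read_cls j i io r)
  then have e: "q = Read io i r" "q' = Read io i r" "adv = False" "act = ARight" "s ! p = CC (Cls j)" by auto
  from inv e obtain h rp X C fr where d: "gsteps [It \<alpha>] h rp" "gstep rp (Some (Num io)) r" "out h = Some X"
      "w0 = X @ C @ w" "s = stk h fr" "wff h fr" "p \<le> top_idx s" "alive fr" "2 \<le> p"
      "\<forall>R. remq h fr (Read io i r) p = Some R \<longrightarrow> vl h io (length h) = Some (C @ R)"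
    by (auto simp: Inv_simps dinv_def)
  have "vcell h fr p = CC (Cls j)" using cellD[OF d(6)] d e by simp
  then have c: "2 \<le> p" "p < bnd h fr + 2" "h ! (p - 2) = Cls j" using vcell_cases(3)[OF d(6)] d by auto
  have bl: "bnd h fr \<le> length h" by (rule bnd_le[OF d(6)])
  have s': "s' = s" "p' = Suc p" using sm e by auto
  have rq: "remq h fr (Read io i r) (Suc p) = remq h fr (Read io i r) p"
    using rd_unfold[of "p - 2" "bnd h fr" h i] c bl \<open>j \<noteq> i\<close> by (simp add: Suc_diff_le numeral_2_eq_2 suc2)
  have tp: "Suc p \<le> top_idx s" using top_stk[OF d(6)] c d(5) by (auto split: list.splits)
  show ?thesis using d s' e w' rq tp unfolding e(2) Inv_simps dinv_def
    by (intro exI[of _ h] exI[of _ rp] exI[of _ X] exI[of _ C] exI[of _ fr]) auto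
next
  case (t_read_end io i r)
  then have e: "q = Read io i r" "q' = Up io r" "adv = False" "act = AStay" "s ! p = CC (Cls i)" by auto
  from inv e obtain h rp X C fr where d: "gsteps [It \<alpha>] h rp" "gstep rp (Some (Num io)) r" "out h = Some X"
      "w0 = X @ C @ w" "s = stk h fr" "wff h fr" "p \<le> top_idx s" "alive fr" "2 \<le> p"
      "\<forall>R. remq h fr (Read io i r) p = Some R \<longrightarrow> vl h io (length h) = Some (C @ R)"
    by (auto simp: Inv_simps dinv_def)
  have "vcell h fr p = CC (Cls i)" using cellD[OF d(6)] d e by simp
  then have c: "2 \<le> p" "p < bnd h fr + 2" "h ! (p - 2) = Cls i" using vcell_cases(3)[OF d(6)] d by auto
  have bl: "bnd h fr \<le> length h" by (rule bnd_le[OF d(6)])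
  have s': "s' = s" "p' = p" using sm e by auto
  have rq: "remq h fr (Up io r) p = remq h fr (Read io i r) p"
    using rd_unfold[of "p - 2" "bnd h fr" h i] c bl by simp
  show ?thesis using d s' e w' rq c unfolding e(2) Inv_simps dinv_def
    by (intro exI[of _ h] exI[of _ rp] exI[of _ X] exI[of _ C] exI[of _ fr]) auto
next
  case (t_read_num io i r j)
  then have e: "q = Read io i r" "q' = Down io j r" "adv = False" "act = ACreate [GF i]" "s ! p = CC (Num j)" by auto
  from inv e obtain h rp X C fr where d: "gsteps [It \<alpha>] h rp" "gstep rp (Some (Num io)) r" "out h = Some X"
      "w0 = X @ C @ w" "s = stk h fr" "wff h fr" "p \<le> top_idx s" "alive fr" "2 \<le> p"
      "\<forall>R. remq h fr (Read io i r) p = Some R \<longrightarrow> vl h io (length h) = Some (C @ R)"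
    by (auto simp: Inv_simps dinv_def)
  have "vcell h fr p = CC (Num j)" using cellD[OF d(6)] d e by simp
  then have c: "2 \<le> p" "p < bnd h fr + 2" "h ! (p - 2) = Num j" using vcell_cases(3)[OF d(6)] d by auto
  have bl: "bnd h fr \<le> length h" by (rule bnd_le[OF d(6)])
  define m where "m = p - 2"
  have pm: "p = m + 2" using c m_def by simp
  have mb: "m < bnd h fr" using c m_def by simp
  have s': "s' = stk h ((i, m, True) # fr)" "p' = m + 3"
    using stack_move_det[OF sm[unfolded e(4) d(5) pm] sm_create[OF d(6) mb]] by auto
  have wf': "wff h ((i, m, True) # fr)" using d(6,8) mb c m_def by (auto simp: alive_def)
  have al': "alive ((i, m, True) # fr)" using d(8) by (simp add: alive_def)
  have tp: "p' \<le> top_idx s'" using s' top_stk_cons[of m h] mb bl by simp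
  have ru: "rd h i m (bnd h fr) = oapp (vl h j m) (rd h i (Suc m) (bnd h fr))"
    using rd_unfold[of m "bnd h fr" h i] c mb bl m_def by simp
  have rq: "remq h ((i, m, True) # fr) (Down io j r) p' = remq h fr (Read io i r) p"
    using ru s' pm by (simp add: vl_def oapp_assoc split: option.split)
  show ?thesis using d s' e w' rq wf' al' tp unfolding e(2) Inv_simps dinv_def
    by (intro exI[of _ h] exI[of _ rp] exI[of _ X] exI[of _ C] exI[of _ "(i, m, True) # fr"]) auto
next
  case (t_up_bot io r)
  then have e: "q = Up io r" "q' = Up io r" "adv = False" "act = ARight" "s ! p = SBot" by auto
  from inv e obtain h rp X C fr where d: "gsteps [It \<alpha>] h rp" "gstep rp (Some (Num io)) r" "out h = Some X"
      "w0 = X @ C @ w" "s = stk h fr" "wff h fr" "p \<le> top_idx s" "alive fr" "p \<le> bnd h fr + 2"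
      "\<forall>R. remq h fr (Up io r) p = Some R \<longrightarrow> vl h io (length h) = Some (C @ R)"
    by (auto simp: Inv_simps dinv_def)
  have "vcell h fr p = SBot" using cellD[OF d(6)] d e by simp
  then have p0: "p = 0" using vcell_cases(1)[OF d(6)] d by auto
  have s': "s' = s" "p' = Suc p" using sm e by auto
  have tp: "Suc p \<le> top_idx s" using top_stk[OF d(6)] p0 d(5) by (auto split: list.splits)
  show ?thesis using d s' e w' p0 tp unfolding e(2) Inv_simps dinv_def
    by (intro exI[of _ h] exI[of _ rp] exI[of _ X] exI[of _ C] exI[of _ fr]) auto
next
  case (t_up_z io r)
  then have e: "q = Up io r" "q' = Up io r" "adv = False" "act = ARight" "s ! p = SCell GZ" by auto
  from inv e obtain h rp X C fr where d: "gsteps [It \<alpha>] h rp" "gstep rp (Some (Num io)) r" "out h = Some X"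
      "w0 = X @ C @ w" "s = stk h fr" "wff h fr" "p \<le> top_idx s" "alive fr" "p \<le> bnd h fr + 2"
      "\<forall>R. remq h fr (Up io r) p = Some R \<longrightarrow> vl h io (length h) = Some (C @ R)"
    by (auto simp: Inv_simps dinv_def)
  have "vcell h fr p = SCell GZ" using cellD[OF d(6)] d e by simp
  then have p0: "p = 1" using vcell_cases(2)[OF d(6)] d by auto
  have s': "s' = s" "p' = Suc p" using sm e by auto
  have tp: "Suc p \<le> top_idx s" using top_stk[OF d(6)] p0 d(5) by (auto split: list.splits)
  show ?thesis using d s' e w' p0 tp unfolding e(2) Inv_simps dinv_def
    by (intro exI[of _ h] exI[of _ rp] exI[of _ X] exI[of _ C] exI[of _ fr]) auto
next
  case (t_up_sym io r e0)
  then have e: "q = Up io r" "q' = Up io r" "adv = False" "act = ARight" "s ! p = CC e0" by auto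
  from inv e obtain h rp X C fr where d: "gsteps [It \<alpha>] h rp" "gstep rp (Some (Num io)) r" "out h = Some X"
      "w0 = X @ C @ w" "s = stk h fr" "wff h fr" "p \<le> top_idx s" "alive fr" "p \<le> bnd h fr + 2"
      "\<forall>R. remq h fr (Up io r) p = Some R \<longrightarrow> vl h io (length h) = Some (C @ R)"
    by (auto simp: Inv_simps dinv_def)
  have "vcell h fr p = CC e0" using cellD[OF d(6)] d e by simp
  then have c: "2 \<le> p" "p < bnd h fr + 2" using vcell_cases(3)[OF d(6)] d by auto
  have s': "s' = s" "p' = Suc p" using sm e by auto
  have tp: "Suc p \<le> top_idx s" using top_stk[OF d(6)] c d(5) by (auto split: list.splits)
  show ?thesis using d s' e w' c tp unfolding e(2) Inv_simps dinv_def
    by (intro exI[of _ h] exI[of _ rp] exI[of _ X] exI[of _ C] exI[of _ fr]) auto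
next
  case (t_up_cent io r)
  then have e: "q = Up io r" "q' = Pop io r" "adv = False" "act = ARight" "s ! p = SCent" by auto
  from inv e obtain h rp X C fr where d: "gsteps [It \<alpha>] h rp" "gstep rp (Some (Num io)) r" "out h = Some X"
      "w0 = X @ C @ w" "s = stk h fr" "wff h fr" "p \<le> top_idx s" "alive fr" "p \<le> bnd h fr + 2"
      "\<forall>R. remq h fr (Up io r) p = Some R \<longrightarrow> vl h io (length h) = Some (C @ R)"
    by (auto simp: Inv_simps dinv_def)
  have "vcell h fr p = SCent" using cellD[OF d(6)] d e by simp
  then obtain i m b fr' where c: "fr = (i, m, b) # fr'" "p = m + 2" using vcell_cases(4)[OF d(6)] d by auto
  have b: "b" using d(8) c by (simp add: alive_def)
  have ml: "m \<le> length h" using d(6) c bnd_le[of h fr'] by auto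
  have s': "s' = s" "p' = Suc p" using sm e by auto
  have tp: "Suc p \<le> top_idx s" using top_stk_cons[OF ml] c b d(5) by simp
  show ?thesis using d s' e w' c tp unfolding e(2) Inv_simps dinv_def
    by (intro exI[of _ h] exI[of _ rp] exI[of _ X] exI[of _ C] exI[of _ fr]) auto
next
  case (t_up_top io r)
  then have e: "q = Up io r" "q' = Push io r" "adv = False" "act = ALeft" "s ! p = STop" by auto
  from inv e obtain h rp X C fr where d: "gsteps [It \<alpha>] h rp" "gstep rp (Some (Num io)) r" "out h = Some X"
      "w0 = X @ C @ w" "s = stk h fr" "wff h fr" "p \<le> top_idx s" "alive fr" "p \<le> bnd h fr + 2"
      "\<forall>R. remq h fr (Up io r) p = Some R \<longrightarrow> vl h io (length h) = Some (C @ R)"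
    by (auto simp: Inv_simps dinv_def)
  have "vcell h fr p = STop" using cellD[OF d(6)] d e by simp
  then have pt: "p = top_idx s" using vcell_cases(6)[OF d(6)] d by auto
  have fr: "fr = []" using pt d(9) top_stk[OF d(6)] d(5) by (auto split: list.splits if_splits)
  have pp: "p = length h + 2" using pt fr d(5) top_stk_nil by simp
  have s': "s' = s" "p' = Suc (length h)" using sm e pp by auto
  have vl: "vl h io (length h) = Some C" using d(10) fr by simp
  show ?thesis using d s' e w' fr vl pp unfolding e(2) Inv_simps dinv_def
    by (intro exI[of _ h] exI[of _ rp] exI[of _ X] exI[of _ C] exI[of _ fr]) auto
next
  case (t_pop io r i)
  then have e: "q = Pop io r" "q' = Destr io i r" "adv = False" "act = AReplace []" "s ! p = SCell (GF i)" by auto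
  from inv e obtain h rp X C fr where d: "gsteps [It \<alpha>] h rp" "gstep rp (Some (Num io)) r" "out h = Some X"
      "w0 = X @ C @ w" "s = stk h fr" "wff h fr" "p \<le> top_idx s" "alive fr"
      "\<forall>R. remq h fr (Pop io r) p = Some R \<longrightarrow> vl h io (length h) = Some (C @ R)"
    by (auto simp: Inv_simps dinv_def)
  have "vcell h fr p = SCell (GF i)" using cellD[OF d(6)] d e by simp
  then obtain m fr' where c: "fr = (i, m, True) # fr'" "p = m + 3" using vcell_cases(5)[OF d(6)] d by auto
  have ml: "m \<le> length h" using d(6) c bnd_le[of h fr'] by auto
  have s': "s' = stk h ((i, m, False) # fr')" "p' = m + 2"
    using stack_move_det[OF sm[unfolded e(4) d(5) c] sm_pop[OF ml]] by auto
  have wf': "wff h ((i, m, False) # fr')" using d(6) c by simp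
  have tp: "p' \<le> top_idx s'" using s' top_stk_cons[OF ml] by simp
  show ?thesis using d s' e w' c wf' tp unfolding e(2) Inv_simps dinv_def
    by (intro exI[of _ h] exI[of _ rp] exI[of _ X] exI[of _ C] exI[of _ "(i, m, False) # fr'"]) auto
next
  case (t_destr io i r)
  then have e: "q = Destr io i r" "q' = Skip io i r" "adv = False" "act = ADestroy" "s ! p = SCent" by auto
  from inv obtain h rp X C fr where d0: "gsteps [It \<alpha>] h rp" "gstep rp (Some (Num io)) r" "out h = Some X"
      "w0 = X @ C @ w" "s = stk h fr" "wff h fr" "p \<le> top_idx s" "mcond h fr (Destr io i r) p C"
      "\<forall>R. remq h fr (Destr io i r) p = Some R \<longrightarrow> vl h io (length h) = Some (C @ R)"
    unfolding e(1) Inv_simps dinv_def qio.simps qr.simps by blast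
  from d0(8) obtain m fr' where mf: "fr = (i, m, False) # fr'" "p = m + 2" by auto
  note d = d0(1-7) mf d0(9)
  have s': "s' = stk h fr'" "p' = m + 2"
    using stack_move_det[OF sm[unfolded e(4) d(5) d(8) d(9)] sm_destroy[OF d(6)[unfolded d(8)]]] by auto
  have wf': "wff h fr'" using d(6,8) by simp
  have al: "alive fr'" using alive_tail d(6,8) by blast
  have mb: "m < bnd h fr'" using d(6,8) by simp
  have tp: "p' \<le> top_idx s'" using s' top_stk[OF wf'] mb by (auto split: list.splits)
  have rq: "remq h fr' (Skip io i r) p' = remq h fr (Destr io i r) p" using s' d(8) by simp
  show ?thesis using d s' e w' wf' al tp rq unfolding e(2) Inv_simps dinv_def
    by (intro exI[of _ h] exI[of _ rp] exI[of _ X] exI[of _ C] exI[of _ fr']) auto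
next
  case (t_skip io i r j)
  then have e: "q = Skip io i r" "q' = Read io i r" "adv = False" "act = ARight" "s ! p = CC (Num j)" by auto
  from inv e obtain h rp X C fr where d: "gsteps [It \<alpha>] h rp" "gstep rp (Some (Num io)) r" "out h = Some X"
      "w0 = X @ C @ w" "s = stk h fr" "wff h fr" "p \<le> top_idx s" "alive fr" "2 \<le> p"
      "\<forall>R. remq h fr (Skip io i r) p = Some R \<longrightarrow> vl h io (length h) = Some (C @ R)"
    by (auto simp: Inv_simps dinv_def)
  have "vcell h fr p = CC (Num j)" using cellD[OF d(6)] d e by simp
  then have c: "2 \<le> p" "p < bnd h fr + 2" using vcell_cases(3)[OF d(6)] d by auto
  have s': "s' = s" "p' = Suc p" using sm e by auto
  have rq: "remq h fr (Read io i r) (Suc p) = remq h fr (Skip io i r) p" by simp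
  have tp: "Suc p \<le> top_idx s" using top_stk[OF d(6)] c d(5) by (auto split: list.splits)
  show ?thesis using d s' e w' rq tp c unfolding e(2) Inv_simps dinv_def
    by (intro exI[of _ h] exI[of _ rp] exI[of _ X] exI[of _ C] exI[of _ fr]) auto
next
  case (t_push io r z)
  then have e: "q = Push io r" "q' = Gen r" "adv = False" "act = AReplace [z, GS (Num io)]" "s ! p = SCell z" by auto
  from inv e obtain h rp X C where d: "gsteps [It \<alpha>] h rp" "gstep rp (Some (Num io)) r" "out h = Some X"
      "w0 = X @ C @ w" "s = stk h []" "p = Suc (length h)" "vl h io (length h) = Some C"
    by (auto simp: Inv_simps dinv_def)
  have z: "z = topsym h" using e stk_nil_top[of h] d by simp
  have s': "s' = stk (h @ [Num io]) [] \<and> p' = Suc (length (h @ [Num io]))"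
    using stack_move_det[OF sm[unfolded e(4) d(5) d(6) z] sm_push[of h "Num io"]] by auto
  have g2: "gsteps [It \<alpha>] (h @ [Num io]) r" using gsteps_snoc[OF d(1,2)] by (simp add: opt_def)
  have "out (h @ [Num io]) = Some (X @ C)" using out_snoc[of h "Num io"] d(3,7) pc_snoc[of h "Num io"] by simp
  then show ?thesis using g2 s' d e w' unfolding e(2) Inv_simps ginv_def by auto
qed

theorem soundness:
  assumes "w0 \<in> alang (DD \<alpha>) (Gen [It \<alpha>]) GZ {Gen []}"
  shows "w0 \<in> rewb_lang \<alpha>"
proof -
  from assms obtain q s n where run: "(astep (DD \<alpha>))\<^sup>*\<^sup>* (Gen [It \<alpha>], w0, [SBot, SCell GZ, STop], 1) (q, [], s, n)"
    and f: "q = Gen []" by (auto simp: alang_def)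
  have "Inv \<alpha> w0 (Gen [It \<alpha>], w0, [SBot, SCell GZ, STop], 1)"
    by (auto simp: Inv_simps ginv_def stk_nil out_def intro: gs_refl)
  have "Inv \<alpha> w0 c" if "(astep (DD \<alpha>))\<^sup>*\<^sup>* (Gen [It \<alpha>], w0, [SBot, SCell GZ, STop], 1) c" for c
    using that
  proof (induct rule: rtranclp_induct)
    case base show ?case by fact
  next
    case (step y z)
    obtain q1 w1 s1 p1 where y: "y = (q1, w1, s1, p1)" by (cases y)
    obtain q2 w2 s2 p2 where z: "z = (q2, w2, s2, p2)" by (cases z)
    from step(2) obtain x adv act where "(q1, x, s1 ! p1, q2, adv, act) \<in> DD \<alpha>"
      "x = (case w1 of [] \<Rightarrow> None | a # _ \<Rightarrow> Some a)" "adv \<longrightarrow> w1 \<noteq> []" "w2 = (if adv then tl w1 else w1)"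
      "stack_move (s1, p1) act (s2, p2)"
      by (auto simp: astep_def y z)
    then show ?case using inv_step[of \<alpha> w0 q1 w1 s1 p1 x q2 adv act w2 s2 p2] step(3) y z
      by (auto simp: DD_def)
  qed
  from this[OF run] f obtain h X where "gsteps [It \<alpha>] h []" "out h = Some X" "w0 = X"
    by (auto simp: Inv_simps ginv_def)
  then have "h \<in> rlang \<alpha>" "deref h = Some w0" by (simp_all add: gsteps_rlang deref_out)
  then show ?thesis unfolding rewb_lang_def by blast
qed



definition okst :: "'a rewb \<Rightarrow> 'a sym list \<Rightarrow> frames \<Rightarrow> bool" where
  "okst \<alpha> h fr = (set h \<subseteq> SY \<alpha> \<and> (\<forall>(i, m, b) \<in> set fr. i \<in> labs \<alpha>))"

lemma stk_has_top: "STop \<in> set (stk h fr)"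
  by (cases fr) (auto simp: stk_def)

lemma p_lt_len: "p \<le> top_idx (stk h fr) \<Longrightarrow> p < length (stk h fr)"
  using top_idx_less[of "stk h fr"] stk_has_top[of h fr] by simp

lemma cell_ok:
  assumes "okst \<alpha> h fr" "wff h fr" "p \<le> top_idx (stk h fr)"
  shows "stk h fr ! p \<in> cells_of (GG \<alpha>)"
proof -
  have bl: "bnd h fr \<le> length h" by (rule bnd_le[OF assms(2)])
  have "vcell h fr p \<in> cells_of (GG \<alpha>)"
  proof -
    have "p - 2 < bnd h fr \<Longrightarrow> h ! (p - 2) \<in> SY \<alpha>" using assms(1) bl by (auto simp: okst_def)
    moreover have "\<And>i m b fr'. fr = (i, m, b) # fr' \<Longrightarrow> i \<in> labs \<alpha>" using assms(1) by (auto simp: okst_def)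
    ultimately show ?thesis unfolding vcell_def GG_def by (auto split: list.splits)
  qed
  then show ?thesis using stk_nth[OF assms(2,3)] by simp
qed

lemma mk_step:
  assumes "(q, x, c, q', adv, act) \<in> Tr" "okq \<alpha> q" "okq \<alpha> q'" "c \<in> cells_of (GG \<alpha>)" "act \<in> ActsF (GG \<alpha>)"
    "s ! p = c" "p < length s" "x = (case w of [] \<Rightarrow> None | a # _ \<Rightarrow> Some a)" "adv \<longrightarrow> w \<noteq> []"
    "stack_move (s, p) act (s', p')" "w' = (if adv then tl w else w)"
  shows "astep (DD \<alpha>) (q, w, s, p) (q', w', s', p')"
proof -
  have "(q, x, c, q', adv, act) \<in> DD \<alpha>" using assms(1-5) by (auto simp: DD_def Box_def QS_def)
  then show ?thesis using assms(6-11) unfolding astep_def by auto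
qed

lemma acts_simple: "AStay \<in> ActsF G" "ALeft \<in> ActsF G" "ARight \<in> ActsF G" "ADestroy \<in> ActsF G"
  "AReplace [] \<in> ActsF G" by (auto simp: ActsF_def)

lemma acts_repl: "z \<in> G \<Longrightarrow> g \<in> G \<Longrightarrow> AReplace [z, g] \<in> ActsF G"
  by (auto simp: ActsF_def)

lemma acts_create: "g \<in> G \<Longrightarrow> ACreate [g] \<in> ActsF G"
  by (auto simp: ActsF_def)

lemma lo_left:
  assumes "wff h fr" "p \<le> top_idx (stk h fr)" "p \<noteq> 0" "vcell h fr p \<noteq> CC (Opn i)"
  shows "lo i (take (min (p - 1) (bnd h fr)) h) = lo i (take (min (p - 1 - 1) (bnd h fr)) h)"
proof -
  have bl: "bnd h fr \<le> length h" by (rule bnd_le[OF assms(1)])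
  show ?thesis
  proof (cases "p = 1")
    case True then show ?thesis by simp
  next
    case False
    show ?thesis
    proof (cases "p < bnd h fr + 2")
      case True
      then have "vcell h fr p = CC (h ! (p - 2))" using False assms(3) by (simp add: vcell_def)
      then have "h ! (p - 2) \<noteq> Opn i" using assms(4) by auto
      moreover have "min (p - 1) (bnd h fr) = Suc (p - 2)" "min (p - 1 - 1) (bnd h fr) = p - 2"
        using True False assms(3) by auto
      ultimately show ?thesis using lo_take_Suc[of "p - 2" h i] True False assms(3) bl by auto
    next
      case False
      then have "min (p - 1) (bnd h fr) = bnd h fr" "min (p - 1 - 1) (bnd h fr) = bnd h fr" by auto
      then show ?thesis by simp
    qed
  qed
qed

lemma L_down:
  assumes wf: "wff h fr" and ok: "okst \<alpha> h fr" and lab: "io \<in> labs \<alpha>" "j \<in> labs \<alpha>" and rr: "r \<in> RR \<alpha>"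
  shows "p < top_idx (stk h fr) \<Longrightarrow> (astep (DD \<alpha>))\<^sup>*\<^sup>* (Down io j r, w, stk h fr, p)
    (case lo j (take (min (p - 1) (bnd h fr)) h) of None \<Rightarrow> (Up io r, w, stk h fr, 0)
       | Some q \<Rightarrow> (Read io j r, w, stk h fr, q + 3))"
proof (induct p)
  case 0
  have c: "stk h fr ! 0 = SBot" using stk_nth[OF wf] by (simp add: vcell_def)
  have "astep (DD \<alpha>) (Down io j r, w, stk h fr, 0) (Up io r, w, stk h fr, 0)"
    by (rule mk_step[OF t_down_bot]) (use c lab rr p_lt_len[of 0 h fr] in \<open>auto simp: acts_simple\<close>)
  then show ?case by simp
next
  case (Suc p0)
  let ?p = "Suc p0"
  have le: "?p \<le> top_idx (stk h fr)" using Suc by simp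
  have cv: "stk h fr ! ?p = vcell h fr ?p" using stk_nth[OF wf le] .
  have cok: "stk h fr ! ?p \<in> cells_of (GG \<alpha>)" using cell_ok[OF ok wf le] .
  have bl: "bnd h fr \<le> length h" by (rule bnd_le[OF wf])
  show ?case
  proof (cases "vcell h fr ?p = CC (Opn j)")
    case True
    then have c: "2 \<le> ?p" "?p < bnd h fr + 2" "h ! (?p - 2) = Opn j" using vcell_cases(3)[OF wf le] by auto
    have "min (?p - 1) (bnd h fr) = Suc (?p - 2)" using c by auto
    then have lo: "lo j (take (min (?p - 1) (bnd h fr)) h) = Some (?p - 2)"
      using lo_take_Suc[of "?p - 2" h j] c bl by auto
    have "astep (DD \<alpha>) (Down io j r, w, stk h fr, ?p) (Read io j r, w, stk h fr, Suc ?p)"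
      by (rule mk_step[OF t_down_found]) (use cv cok True lab rr Suc(2) p_lt_len[OF le] in \<open>auto simp: acts_simple\<close>)
    moreover have "(case lo j (take (min (?p - 1) (bnd h fr)) h) of None \<Rightarrow> (Up io r, w, stk h fr, 0)
       | Some q \<Rightarrow> (Read io j r, w, stk h fr, q + 3)) = (Read io j r, w, stk h fr, Suc ?p)"
      unfolding lo using c by simp
    ultimately show ?thesis by (metis r_into_rtranclp)
  next
    case False
    have nb: "vcell h fr ?p \<noteq> SBot" using vcell_cases(1)[OF wf le] by simp
    have nt: "vcell h fr ?p \<noteq> STop" using vcell_cases(6)[OF wf le] Suc(2) by simp
    have "astep (DD \<alpha>) (Down io j r, w, stk h fr, ?p) (Down io j r, w, stk h fr, p0)"
      by (rule mk_step[OF t_down_left[of "stk h fr ! ?p"]]) (use cv cok False nb nt lab rr Suc(2) p_lt_len[OF le] in \<open>auto simp: acts_simple\<close>)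
    moreover have "lo j (take (min (?p - 1) (bnd h fr)) h) = lo j (take (min (p0 - 1) (bnd h fr)) h)"
      using lo_left[OF wf le _ False] by simp
    ultimately show ?thesis using Suc by (auto intro: converse_rtranclp_into_rtranclp)
  qed
qed

lemma L_up:
  assumes wf: "wff h fr" and ok: "okst \<alpha> h fr" and lab: "io \<in> labs \<alpha>" and rr: "r \<in> RR \<alpha>" and al: "alive fr"
  shows "p \<le> bnd h fr + 2 \<Longrightarrow> (astep (DD \<alpha>))\<^sup>*\<^sup>* (Up io r, w, stk h fr, p)
    (case fr of [] \<Rightarrow> (Push io r, w, stk h fr, Suc (length h)) | (i, m, b) # _ \<Rightarrow> (Pop io r, w, stk h fr, m + 3))"
proof (induct "bnd h fr + 2 - p" arbitrary: p)
  case 0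
  then have p: "p = bnd h fr + 2" by simp
  have le: "p \<le> top_idx (stk h fr)" using top_stk[OF wf] p by (auto split: list.splits)
  have cv: "stk h fr ! p = vcell h fr p" using stk_nth[OF wf le] .
  show ?case
  proof (cases fr)
    case Nil
    have c: "stk h fr ! p = STop" using cv p Nil by (simp add: vcell_def)
    have "astep (DD \<alpha>) (Up io r, w, stk h fr, p) (Push io r, w, stk h fr, p - 1)"
      by (rule mk_step[OF t_up_top]) (use c lab rr le p_lt_len[OF le] p in \<open>auto simp: acts_simple\<close>)
    then show ?thesis using Nil p by simp
  next
    case (Cons f fr')
    obtain i m b where f: "f = (i, m, b)" by (cases f)
    have c: "stk h fr ! p = SCent" using cv p Cons f by (simp add: vcell_def)
    have "astep (DD \<alpha>) (Up io r, w, stk h fr, p) (Pop io r, w, stk h fr, Suc p)"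
      by (rule mk_step[OF t_up_cent]) (use c lab rr le p_lt_len[OF le] p al Cons f top_stk[OF wf] in \<open>auto simp: acts_simple alive_def\<close>)
    then show ?thesis using Cons f p by (simp add: numeral_eq_Suc r_into_rtranclp)
  qed
next
  case (Suc d)
  then have pl: "p < bnd h fr + 2" by simp
  have le: "p \<le> top_idx (stk h fr)" using top_stk[OF wf] pl by (auto split: list.splits)
  have lt: "p < top_idx (stk h fr)" using top_stk[OF wf] pl by (auto split: list.splits)
  have cv: "stk h fr ! p = vcell h fr p" using stk_nth[OF wf le] .
  have cok: "stk h fr ! p \<in> cells_of (GG \<alpha>)" using cell_ok[OF ok wf le] .
  have st: "astep (DD \<alpha>) (Up io r, w, stk h fr, p) (Up io r, w, stk h fr, Suc p)"
  proof (cases "p = 0")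
    case True
    then have c: "stk h fr ! p = SBot" using cv by (simp add: vcell_def)
    show ?thesis
      by (rule mk_step[OF t_up_bot]) (use c lab rr le lt p_lt_len[OF le] pl in \<open>auto simp: acts_simple\<close>)
  next
    case False
    show ?thesis
    proof (cases "p = 1")
      case True
      then have c: "stk h fr ! p = SCell GZ" using cv by (simp add: vcell_def)
      show ?thesis
        by (rule mk_step[OF t_up_z]) (use c lab rr le lt p_lt_len[OF le] pl in \<open>auto simp: acts_simple GG_def\<close>)
    next
      case F1: False
      then have c: "stk h fr ! p = CC (h ! (p - 2))" using cv False pl by (simp add: vcell_def)
      show ?thesis
        by (rule mk_step[OF t_up_sym]) (use c cok lab rr le lt p_lt_len[OF le] pl in \<open>auto simp: acts_simple\<close>)
    qed
  qed
  have "(astep (DD \<alpha>))\<^sup>*\<^sup>* (Up io r, w, stk h fr, Suc p)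
    (case fr of [] \<Rightarrow> (Push io r, w, stk h fr, Suc (length h)) | (i, m, b) # _ \<Rightarrow> (Pop io r, w, stk h fr, m + 3))"
    using Suc(1)[of "Suc p"] Suc(2) pl by simp
  with st show ?case by (rule converse_rtranclp_into_rtranclp)
qed



lemma okst_SY: "okst \<alpha> h fr \<Longrightarrow> k < length h \<Longrightarrow> h ! k \<in> SY \<alpha>"
  by (auto simp: okst_def)

lemma L_read:
  "rd h i n m = Some R \<Longrightarrow> m = bnd h fr \<Longrightarrow> wff h fr \<Longrightarrow> alive fr \<Longrightarrow> okst \<alpha> h fr \<Longrightarrow>
   io \<in> labs \<alpha> \<Longrightarrow> i \<in> labs \<alpha> \<Longrightarrow> r \<in> RR \<alpha> \<Longrightarrow>
   \<exists>p'. p' \<le> m + 2 \<and> (astep (DD \<alpha>))\<^sup>*\<^sup>* (Read io i r, R @ w, stk h fr, n + 2) (Up io r, w, stk h fr, p')"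
proof (induct h i n m arbitrary: fr w R rule: rd.induct)
  case (1 h i n m)
  note IH = "1.hyps"
  note prems = "1.prems"
  have nmnl: "n < m \<and> n < length h"
  proof (rule ccontr)
    assume "\<not> (n < m \<and> n < length h)"
    then have "rd h i n m = None" by (subst rd.simps) auto
    then show False using prems(1) by simp
  qed
  then have nm: "n < m" and nl: "n < length h" by auto
  have wf: "wff h fr" and al: "alive fr" and ok: "okst \<alpha> h fr" and lab: "io \<in> labs \<alpha>" "i \<in> labs \<alpha>"
    and rr: "r \<in> RR \<alpha>" and mb: "m = bnd h fr" using prems by auto
  have bl: "bnd h fr \<le> length h" by (rule bnd_le[OF wf])
  have le: "n + 2 \<le> top_idx (stk h fr)" using top_stk[OF wf] nm mb by (auto split: list.splits)
  have lt: "n + 2 < top_idx (stk h fr)" using top_stk[OF wf] nm mb by (auto split: list.splits)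
  have cv: "stk h fr ! (n + 2) = CC (h ! n)" using stk_nth[OF wf le] vcell_simps(3)[of "n + 2" h fr] nm mb by simp
  have cok: "CC (h ! n) \<in> cells_of (GG \<alpha>)" using cell_ok[OF ok wf le] cv by simp
  have pl: "n + 2 < length (stk h fr)" using p_lt_len[OF le] .
  have ru: "rd h i n m = (case h ! n of
        Ch a \<Rightarrow> map_option ((#) a) (rd h i (Suc n) m)
      | Opn j \<Rightarrow> rd h i (Suc n) m
      | Cls j \<Rightarrow> (if j = i then Some [] else rd h i (Suc n) m)
      | Num j \<Rightarrow> oapp (vl h j n) (rd h i (Suc n) m))" using rd_unfold[OF nm nl] .
  have e3: "Suc n + 2 = Suc (n + 2)" by simp
  have nc: "\<not> (m \<le> n \<or> length h \<le> n)" using nm nl by auto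
  show ?case
  proof (cases "h ! n")
    case (Ch a)
    then have "map_option ((#) a) (rd h i (Suc n) m) = Some R" using ru prems(1) by auto
    then obtain R' where R: "R = a # R'" "rd h i (Suc n) m = Some R'" by auto
    have st: "astep (DD \<alpha>) (Read io i r, R @ w, stk h fr, n + 2) (Read io i r, R' @ w, stk h fr, Suc (n + 2))"
      by (rule mk_step[OF t_read_ch]) (use cv cok Ch lab rr le lt pl R in \<open>auto simp: acts_simple\<close>)
    from IH(1)[OF nc Ch R(2) prems(2-8)] obtain p' where "p' \<le> m + 2" "(astep (DD \<alpha>))\<^sup>*\<^sup>* (Read io i r, R' @ w, stk h fr, Suc n + 2) (Up io r, w, stk h fr, p')" by blast
    note run = this(2)[unfolded e3]
    have "(astep (DD \<alpha>))\<^sup>*\<^sup>* (Read io i r, R @ w, stk h fr, n + 2) (Up io r, w, stk h fr, p')"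
      using converse_rtranclp_into_rtranclp[OF st run] .
    then show ?thesis using \<open>p' \<le> m + 2\<close> by blast
  next
    case (Opn j)
    then have R: "rd h i (Suc n) m = Some R" using ru prems(1) by auto
    have st: "astep (DD \<alpha>) (Read io i r, R @ w, stk h fr, n + 2) (Read io i r, R @ w, stk h fr, Suc (n + 2))"
      by (rule mk_step[OF t_read_opn]) (use cv cok Opn lab rr le lt pl in \<open>auto simp: acts_simple\<close>)
    from IH(2)[OF nc Opn R prems(2-8)] obtain p' where "p' \<le> m + 2" "(astep (DD \<alpha>))\<^sup>*\<^sup>* (Read io i r, R @ w, stk h fr, Suc n + 2) (Up io r, w, stk h fr, p')" by blast
    note run = this(2)[unfolded e3]
    have "(astep (DD \<alpha>))\<^sup>*\<^sup>* (Read io i r, R @ w, stk h fr, n + 2) (Up io r, w, stk h fr, p')"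
      using converse_rtranclp_into_rtranclp[OF st run] .
    then show ?thesis using \<open>p' \<le> m + 2\<close> by blast
  next
    case (Cls j)
    show ?thesis
    proof (cases "j = i")
      case True
      then have R: "R = []" using ru prems(1) Cls by auto
      have st: "astep (DD \<alpha>) (Read io i r, R @ w, stk h fr, n + 2) (Up io r, w, stk h fr, n + 2)"
        by (rule mk_step[OF t_read_end]) (use cv cok Cls True lab rr le lt pl R in \<open>auto simp: acts_simple\<close>)
      then show ?thesis using nm by (intro exI[of _ "n + 2"]) auto
    next
      case False
      then have R: "rd h i (Suc n) m = Some R" using ru prems(1) Cls by auto
      have st: "astep (DD \<alpha>) (Read io i r, R @ w, stk h fr, n + 2) (Read io i r, R @ w, stk h fr, Suc (n + 2))"
        by (rule mk_step[OF t_read_cls[OF False]]) (use cv cok Cls lab rr le lt pl in \<open>auto simp: acts_simple\<close>)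
      from IH(3)[OF nc Cls False R prems(2-8)] obtain p' where "p' \<le> m + 2" "(astep (DD \<alpha>))\<^sup>*\<^sup>* (Read io i r, R @ w, stk h fr, Suc n + 2) (Up io r, w, stk h fr, p')" by blast
      note run = this(2)[unfolded e3]
    have "(astep (DD \<alpha>))\<^sup>*\<^sup>* (Read io i r, R @ w, stk h fr, n + 2) (Up io r, w, stk h fr, p')"
      using converse_rtranclp_into_rtranclp[OF st run] .
    then show ?thesis using \<open>p' \<le> m + 2\<close> by blast
    qed
  next
    case (Num j)
    then have "oapp (vl h j n) (rd h i (Suc n) m) = Some R" using ru prems(1) by simp
    then obtain V R2 where V: "vl h j n = Some V" and R2: "rd h i (Suc n) m = Some R2" and R: "R = V @ R2"
      unfolding oapp_Some_iff by blast
    have jl: "j \<in> labs \<alpha>" using okst_SY[OF ok nl] Num by (simp add: SY_def)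
    let ?fr1 = "(i, n, True) # fr"
    have wf1: "wff h ?fr1" using wf al nm mb Num by (auto simp: alive_def)
    have al1: "alive ?fr1" using al by (simp add: alive_def)
    have ok1: "okst \<alpha> h ?fr1" using ok lab by (simp add: okst_def)
    have nl': "n \<le> length h" using nl by simp
    have top1: "top_idx (stk h ?fr1) = n + 4" using top_stk_cons[OF nl'] by simp
    have s1: "astep (DD \<alpha>) (Read io i r, R @ w, stk h fr, n + 2) (Down io j r, R @ w, stk h ?fr1, n + 3)"
      by (rule mk_step[OF t_read_num]) (use cv cok Num lab jl rr le lt pl sm_create[OF wf, of n i] nm mb
          in \<open>auto simp: acts_create GG_def\<close>)
    have down: "(astep (DD \<alpha>))\<^sup>*\<^sup>* (Down io j r, R @ w, stk h ?fr1, n + 3)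
      (case lo j (take n h) of None \<Rightarrow> (Up io r, R @ w, stk h ?fr1, 0) | Some q \<Rightarrow> (Read io j r, R @ w, stk h ?fr1, q + 3))"
      using L_down[OF wf1 ok1 lab(1) jl rr, of "n + 3" "R @ w"] top1 by simp
    have toPop: "(astep (DD \<alpha>))\<^sup>*\<^sup>* (Down io j r, R @ w, stk h ?fr1, n + 3) (Pop io r, R2 @ w, stk h ?fr1, n + 3)"
    proof (cases "lo j (take n h)")
      case None
      then have "V = []" using V by (simp add: vl_def)
      then have d: "(astep (DD \<alpha>))\<^sup>*\<^sup>* (Down io j r, R @ w, stk h ?fr1, n + 3) (Up io r, R2 @ w, stk h ?fr1, 0)"
        using down None R by simp
      have "(astep (DD \<alpha>))\<^sup>*\<^sup>* (Up io r, R2 @ w, stk h ?fr1, 0) (Pop io r, R2 @ w, stk h ?fr1, n + 3)"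
        using L_up[OF wf1 ok1 lab(1) rr al1, of 0 "R2 @ w"] by simp
      with d show ?thesis by (rule rtranclp_trans)
    next
      case (Some q)
      then have d: "(astep (DD \<alpha>))\<^sup>*\<^sup>* (Down io j r, R @ w, stk h ?fr1, n + 3) (Read io j r, V @ R2 @ w, stk h ?fr1, Suc q + 2)"
        using down R by (simp add: numeral_eq_Suc)
      have rq: "rd h j (Suc q) n = Some V" using V Some by (simp add: vl_def)
      have bn1: "n = bnd h ?fr1" by simp
      from IH(4)[OF nc Num Some rq bn1 wf1 al1 ok1 lab(1) jl rr, of "R2 @ w"] obtain p' where p': "p' \<le> n + 2" "(astep (DD \<alpha>))\<^sup>*\<^sup>* (Read io j r, V @ R2 @ w, stk h ?fr1, Suc q + 2) (Up io r, R2 @ w, stk h ?fr1, p')" by blast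
      have "(astep (DD \<alpha>))\<^sup>*\<^sup>* (Up io r, R2 @ w, stk h ?fr1, p') (Pop io r, R2 @ w, stk h ?fr1, n + 3)"
        using L_up[OF wf1 ok1 lab(1) rr al1, of p' "R2 @ w"] p'(1) by simp
      then show ?thesis using d p'(2) by (meson rtranclp_trans)
    qed
    let ?fr0 = "(i, n, False) # fr"
    have wf0: "wff h ?fr0" using wf1 by simp
    have top0: "top_idx (stk h ?fr0) = n + 3" using top_stk_cons[OF nl'] by simp
    have c1: "stk h ?fr1 ! (n + 3) = SCell (GF i)" using stk_nth[OF wf1] top1 vcell_simps(6)[of h i n fr] by simp
    have s2: "astep (DD \<alpha>) (Pop io r, R2 @ w, stk h ?fr1, n + 3) (Destr io i r, R2 @ w, stk h ?fr0, n + 2)"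
      by (rule mk_step[OF t_pop]) (use c1 lab rr top1 p_lt_len[of "n + 3" h ?fr1] sm_pop[OF nl', of i fr]
          in \<open>auto simp: acts_simple GG_def\<close>)
    have c2: "stk h ?fr0 ! (n + 2) = SCent" using stk_nth[OF wf0] top0 vcell_simps(5)[of h i n False fr] by simp
    have s3: "astep (DD \<alpha>) (Destr io i r, R2 @ w, stk h ?fr0, n + 2) (Skip io i r, R2 @ w, stk h fr, n + 2)"
      by (rule mk_step[OF t_destr]) (use c2 lab rr top0 p_lt_len[of "n + 2" h ?fr0] sm_destroy[OF wf1]
          in \<open>auto simp: acts_simple\<close>)
    have s4: "astep (DD \<alpha>) (Skip io i r, R2 @ w, stk h fr, n + 2) (Read io i r, R2 @ w, stk h fr, Suc (n + 2))"
      by (rule mk_step[OF t_skip]) (use cv cok Num lab rr le lt pl in \<open>auto simp: acts_simple\<close>)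
    from IH(5)[OF nc Num R2 prems(2-8)] obtain p' where "p' \<le> m + 2" "(astep (DD \<alpha>))\<^sup>*\<^sup>* (Read io i r, R2 @ w, stk h fr, Suc n + 2) (Up io r, w, stk h fr, p')" by blast
    note run = this(2)[unfolded e3]
    have "(astep (DD \<alpha>))\<^sup>*\<^sup>* (Pop io r, R2 @ w, stk h ?fr1, n + 3) (Up io r, w, stk h fr, p')"
      using converse_rtranclp_into_rtranclp[OF s2 converse_rtranclp_into_rtranclp[OF s3 converse_rtranclp_into_rtranclp[OF s4 run]]] .
    then have "(astep (DD \<alpha>))\<^sup>*\<^sup>* (Read io i r, R @ w, stk h fr, n + 2) (Up io r, w, stk h fr, p')"
      using s1 toPop by (meson converse_rtranclp_into_rtranclp rtranclp_trans)
    then show ?thesis using \<open>p' \<le> m + 2\<close> by blast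
  qed
qed



lemma RR_ilabs: "r \<in> RR \<alpha> \<Longrightarrow> x \<in> set r \<Longrightarrow> ilabs x \<subseteq> labs \<alpha>"
proof (induct \<alpha> arbitrary: r)
  case (RCat a b) then show ?case by fastforce
next
  case (RAlt a b) then show ?case by fastforce
next
  case (RStar a) then show ?case by fastforce
next
  case (RCap j a) then show ?case by fastforce
qed auto

lemma gstep_lab_ok: "gstep r e r' \<Longrightarrow> r \<in> RR \<alpha> \<Longrightarrow> set (opt e) \<subseteq> SY \<alpha>"
  using gstep_labs[of r e r' "labs \<alpha>"] RR_ilabs[of r \<alpha>] by (auto simp: SY_def)

lemma out_prefix: "out (h @ h') = Some Z \<Longrightarrow> \<exists>Z1 Z2. out h = Some Z1 \<and> Z = Z1 @ Z2"
proof -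
  have "outk (h @ h') (length h + k) = Some Z \<Longrightarrow> \<exists>Z1 Z2. out h = Some Z1 \<and> Z = Z1 @ Z2" for k Z
  proof (induct k arbitrary: Z)
    case 0 then show ?case using outk_prefix[of "length h" h h'] by (auto simp: out_def)
  next
    case (Suc k)
    then obtain Z' P where "outk (h @ h') (length h + k) = Some Z'" "Z = Z' @ P"
      by (auto simp: oapp_Some_iff)
    then show ?case using Suc(1) by fastforce
  qed
  moreover assume "out (h @ h') = Some Z"
  ultimately show ?thesis unfolding out_def by (metis length_append)
qed

lemma topsym_ok: "set h \<subseteq> SY \<alpha> \<Longrightarrow> topsym h \<in> GG \<alpha>"
  by (auto simp: topsym_def GG_def) (metis last_in_set subsetD image_eqI)

lemma okst_nil: "set h \<subseteq> SY \<alpha> \<Longrightarrow> okst \<alpha> h []" by (simp add: okst_def)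

lemma L_deref:
  assumes g: "gstep r (Some (Num i)) r'" and rr: "r \<in> RR \<alpha>" and sy: "set h \<subseteq> SY \<alpha>"
    and V: "vl h i (length h) = Some V"
  shows "(astep (DD \<alpha>))\<^sup>*\<^sup>* (Gen r, V @ w, stk h [], Suc (length h)) (Gen r', w, stk (h @ [Num i]) [], Suc (length (h @ [Num i])))"
proof -
  have rr': "r' \<in> RR \<alpha>" using RR_closed[OF rr g] .
  have il: "i \<in> labs \<alpha>" using gstep_lab_ok[OF g rr] by (simp add: opt_def SY_def)
  have ok: "okst \<alpha> h []" using okst_nil[OF sy] .
  have wf: "wff h []" by simp
  have al: "alive []" by (simp add: alive_def)
  have top: "top_idx (stk h []) = length h + 2" by (rule top_stk_nil)
  have le: "Suc (length h) \<le> top_idx (stk h [])" using top by simp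
  have c: "stk h [] ! Suc (length h) = SCell (topsym h)" by (rule stk_nil_top)
  have tok: "topsym h \<in> GG \<alpha>" using topsym_ok[OF sy] .
  have s1: "astep (DD \<alpha>) (Gen r, V @ w, stk h [], Suc (length h)) (Down i i r', V @ w, stk h [], Suc (length h))"
    by (rule mk_step[OF t_gen_num[OF g]]) (use c tok rr rr' il le top p_lt_len[OF le] in \<open>auto simp: acts_simple\<close>)
  have down: "(astep (DD \<alpha>))\<^sup>*\<^sup>* (Down i i r', V @ w, stk h [], Suc (length h))
    (case lo i h of None \<Rightarrow> (Up i r', V @ w, stk h [], 0) | Some q \<Rightarrow> (Read i i r', V @ w, stk h [], q + 3))"
    using L_down[OF wf ok il il rr', of "Suc (length h)" "V @ w"] top by simp
  have toPush: "(astep (DD \<alpha>))\<^sup>*\<^sup>* (Down i i r', V @ w, stk h [], Suc (length h)) (Push i r', w, stk h [], Suc (length h))"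
  proof (cases "lo i h")
    case None
    then have "V = []" using V by (simp add: vl_def)
    then have d: "(astep (DD \<alpha>))\<^sup>*\<^sup>* (Down i i r', V @ w, stk h [], Suc (length h)) (Up i r', w, stk h [], 0)"
      using down None by simp
    have "(astep (DD \<alpha>))\<^sup>*\<^sup>* (Up i r', w, stk h [], 0) (Push i r', w, stk h [], Suc (length h))"
      using L_up[OF wf ok il rr' al, of 0 w] by simp
    with d show ?thesis by (rule rtranclp_trans)
  next
    case (Some q)
    then have d: "(astep (DD \<alpha>))\<^sup>*\<^sup>* (Down i i r', V @ w, stk h [], Suc (length h)) (Read i i r', V @ w, stk h [], Suc q + 2)"
      using down by (simp add: numeral_eq_Suc)
    have rq: "rd h i (Suc q) (length h) = Some V" using V Some by (simp add: vl_def)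
    obtain p' where p': "p' \<le> length h + 2" "(astep (DD \<alpha>))\<^sup>*\<^sup>* (Read i i r', V @ w, stk h [], Suc q + 2) (Up i r', w, stk h [], p')"
      using L_read[OF rq _ wf al ok il il rr', of w] by auto
    have "(astep (DD \<alpha>))\<^sup>*\<^sup>* (Up i r', w, stk h [], p') (Push i r', w, stk h [], Suc (length h))"
      using L_up[OF wf ok il rr' al, of p' w] p'(1) by simp
    then show ?thesis using d p'(2) by (meson rtranclp_trans)
  qed
  have s2: "astep (DD \<alpha>) (Push i r', w, stk h [], Suc (length h)) (Gen r', w, stk (h @ [Num i]) [], Suc (length (h @ [Num i])))"
    by (rule mk_step[OF t_push]) (use c tok rr' il le p_lt_len[OF le] sm_push[of h "Num i"] in \<open>auto simp: acts_repl GG_def SY_def\<close>)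
  have "(astep (DD \<alpha>))\<^sup>*\<^sup>* (Down i i r', V @ w, stk h [], Suc (length h)) (Gen r', w, stk (h @ [Num i]) [], Suc (length (h @ [Num i])))"
    using toPush s2 by (rule rtranclp.rtrancl_into_rtrancl)
  with s1 show ?thesis by (rule converse_rtranclp_into_rtranclp)
qed

lemma L_gen1:
  assumes g: "gstep r e r'" and rr: "r \<in> RR \<alpha>" and sy: "set h \<subseteq> SY \<alpha>"
    and o1: "out h = Some X" and o2: "out (h @ opt e) = Some (X @ Y)"
  shows "(astep (DD \<alpha>))\<^sup>*\<^sup>* (Gen r, Y @ w, stk h [], Suc (length h)) (Gen r', w, stk (h @ opt e) [], Suc (length (h @ opt e)))"
proof -
  have rr': "r' \<in> RR \<alpha>" using RR_closed[OF rr g] .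
  have eok: "set (opt e) \<subseteq> SY \<alpha>" using gstep_lab_ok[OF g rr] .
  have top: "top_idx (stk h []) = length h + 2" by (rule top_stk_nil)
  have le: "Suc (length h) \<le> top_idx (stk h [])" using top by simp
  have c: "stk h [] ! Suc (length h) = SCell (topsym h)" by (rule stk_nil_top)
  have tok: "topsym h \<in> GG \<alpha>" using topsym_ok[OF sy] .
  show ?thesis
  proof (cases e)
    case None
    then have Y: "Y = []" using o1 o2 by (simp add: opt_def)
    have "astep (DD \<alpha>) (Gen r, Y @ w, stk h [], Suc (length h)) (Gen r', w, stk h [], Suc (length h))"
      by (rule mk_step[OF t_gen_none]) (use g None Y c tok rr rr' le p_lt_len[OF le] in \<open>auto simp: acts_simple\<close>)
    then show ?thesis using None by (simp add: opt_def)
  next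
    case (Some s)
    then have eSY: "s \<in> SY \<alpha>" using eok by (simp add: opt_def)
    have op: "opt e = [s]" using Some by (simp add: opt_def)
    have o3: "out (h @ [s]) = oapp (Some X) (pc (h @ [s]) (length h))" using out_snoc[of h s] o1 by simp
    show ?thesis
    proof (cases s)
      case (Ch a)
      then have Y: "Y = [a]" using o2 o3 op by (simp add: pc_snoc)
      have "astep (DD \<alpha>) (Gen r, Y @ w, stk h [], Suc (length h)) (Gen r', w, stk (h @ [s]) [], Suc (length (h @ [s])))"
        by (rule mk_step[OF t_gen_ch]) (use g Some Ch Y c tok rr rr' le p_lt_len[OF le] sm_push[of h s] eSY in \<open>auto simp: acts_repl GG_def\<close>)
      then show ?thesis using op by simp
    next
      case (Opn j)
      then have Y: "Y = []" using o2 o3 op by (simp add: pc_snoc)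
      have "astep (DD \<alpha>) (Gen r, Y @ w, stk h [], Suc (length h)) (Gen r', w, stk (h @ [s]) [], Suc (length (h @ [s])))"
        by (rule mk_step[OF t_gen_opn]) (use g Some Opn Y c tok rr rr' le p_lt_len[OF le] sm_push[of h s] eSY in \<open>auto simp: acts_repl GG_def\<close>)
      then show ?thesis using op by simp
    next
      case (Cls j)
      then have Y: "Y = []" using o2 o3 op by (simp add: pc_snoc)
      have "astep (DD \<alpha>) (Gen r, Y @ w, stk h [], Suc (length h)) (Gen r', w, stk (h @ [s]) [], Suc (length (h @ [s])))"
        by (rule mk_step[OF t_gen_cls]) (use g Some Cls Y c tok rr rr' le p_lt_len[OF le] sm_push[of h s] eSY in \<open>auto simp: acts_repl GG_def\<close>)
      then show ?thesis using op by simp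
    next
      case (Num i)
      then have "oapp (Some X) (vl h i (length h)) = Some (X @ Y)" using o2 o3 op by (simp add: pc_snoc)
      then have V: "vl h i (length h) = Some Y" by (auto simp: oapp_Some_iff)
      show ?thesis using L_deref[OF _ rr sy V, of r' w] g Some Num op by simp
    qed
  qed
qed

lemma L_gens:
  "gsteps r u r' \<Longrightarrow> r \<in> RR \<alpha> \<Longrightarrow> set h \<subseteq> SY \<alpha> \<Longrightarrow> out h = Some X \<Longrightarrow> out (h @ u) = Some (X @ Y) \<Longrightarrow>
   (astep (DD \<alpha>))\<^sup>*\<^sup>* (Gen r, Y @ w, stk h [], Suc (length h)) (Gen r', w, stk (h @ u) [], Suc (length (h @ u)))"
proof (induct arbitrary: h X Y rule: gsteps.induct)
  case (gs_refl r)
  then have "Y = []" by simp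
  then show ?case by simp
next
  case (gs_step r e r1 u r'')
  let ?h1 = "h @ opt e"
  have o: "out (?h1 @ u) = Some (X @ Y)" using gs_step(7) by simp
  obtain Z1 Z2 where z: "out ?h1 = Some Z1" "X @ Y = Z1 @ Z2" using out_prefix[OF o] by blast
  obtain Z0 Y1 where "out h = Some Z0" "Z1 = Z0 @ Y1" using out_prefix[OF z(1)] by blast
  then have Y1: "out ?h1 = Some (X @ Y1)" "Y = Y1 @ Z2" using z gs_step(6) by auto
  have rr1: "r1 \<in> RR \<alpha>" using RR_closed[OF gs_step(4) gs_step(1)] .
  have sy1: "set ?h1 \<subseteq> SY \<alpha>" using gs_step(5) gstep_lab_ok[OF gs_step(1,4)] \<open>set h \<subseteq> SY \<alpha>\<close> by auto
  have s1: "(astep (DD \<alpha>))\<^sup>*\<^sup>* (Gen r, Y1 @ Z2 @ w, stk h [], Suc (length h)) (Gen r1, Z2 @ w, stk ?h1 [], Suc (length ?h1))"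
    using L_gen1[OF gs_step(1,4) gs_step(5,6) Y1(1)] .
  have o2: "out (?h1 @ u) = Some ((X @ Y1) @ Z2)" using o Y1 by simp
  have s2: "(astep (DD \<alpha>))\<^sup>*\<^sup>* (Gen r1, Z2 @ w, stk ?h1 [], Suc (length ?h1)) (Gen r'', w, stk (?h1 @ u) [], Suc (length (?h1 @ u)))"
    using gs_step(3)[OF rr1 sy1 Y1(1) o2] .
  show ?case using rtranclp_trans[OF s1 s2] Y1(2) by simp
qed

theorem completeness:
  assumes "w0 \<in> rewb_lang \<alpha>"
  shows "w0 \<in> alang (DD \<alpha>) (Gen [It \<alpha>]) GZ {Gen []}"
proof -
  from assms obtain v where v: "v \<in> rlang \<alpha>" "deref v = Some w0" by (auto simp: rewb_lang_def)
  have g: "gsteps [It \<alpha>] v []" using v(1) gsteps_rlang by blast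
  have o: "out ([] @ v) = Some ([] @ w0)" using v(2) deref_out[of v] by simp
  have "(astep (DD \<alpha>))\<^sup>*\<^sup>* (Gen [It \<alpha>], w0 @ [], stk [] [], Suc (length ([]::'a sym list))) (Gen [], [], stk ([] @ v) [], Suc (length ([] @ v)))"
    by (rule L_gens[OF g RR_top _ _ o]) (auto simp: out_def)
  then show ?thesis unfolding alang_def by (auto simp: stk_nil)
qed

theorem main_eq: "nsa_lang (AUT \<alpha>) = rewb_lang \<alpha>"
  using soundness completeness lang_AUT by blast


theorem theorem1:
  fixes \<alpha> :: "('a::finite) rewb" and k :: nat
  assumes "rewb_k k \<alpha>"
  shows "\<exists>A :: 'a nsa. is_nsa A \<and> nsa_lang A = rewb_lang \<alpha>"
  by (intro exI[of _ "AUT \<alpha>"]) (simp add: is_nsa_AUT main_eq)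

end
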